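(* Let $k$ be a field of characteristic $p>0$ and let $d_1,\ldots,d_{n+1}$ be positive integers. If the algebra $k[x_1,\ldots,x_{n+1}]/(x_1^{d_1}, \ldots, x_{n+1}^{d_{n+1}})$ has the weak Lefschetz property, then there exist forms $f_1,\ldots,f_{n+1}\in R=k[x_1,\ldots,x_n]$ of degrees $d_1,\ldots,d_{n+1}$ such that \[(R/(f_1,\ldots,f_{n+1}))(t) = \left[\frac{\prod_{i=1}^{n+1}(1-t^{d_i})}{(1-t)^n} \right].\]
   Context: For a graded algebra $C=\bigoplus_{i\ge 0}C_i$ over $k$ with finite-dimensional components, $C(t)=\sum_{i\ge0}\dim_k(C_i)t^i$ is its Hilbert series. For a power series $\sum_{i\ge 0}a_it^i$ with integer coefficients, $[\sum_{i\ge0} a_i t^i]$ denotes its truncation at the first negative coefficient, i.e. $\sum_{i<i_0}a_it^i$ where $i_0$ is the least index with $a_{i_0}<0$ (the whole series if there is none). A graded artinian algebra $A$ has the weak Lefschetz property if there is a linear form $\ell\in A_1$ such that for every $i$ the map $A_i\to A_{i+1}$, $a\mapsto \ell a$, is injective or surjective. *)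

theory Defs
  imports "HOL-Library.Poly_Mapping" "HOL-Computational_Algebra.Formal_Power_Series"
begin

text \<open>Multivariate polynomials over a field: finitely supported maps from monomials
(exponent vectors, finitely supported maps nat to nat; variable x_(i+1) is index i)
to coefficients.\<close>

type_synonym 'a mpoly = "(nat \<Rightarrow>\<^sub>0 nat) \<Rightarrow>\<^sub>0 'a"

definition mscale :: "'a::field \<Rightarrow> 'a mpoly \<Rightarrow> 'a mpoly" where
  "mscale c p = Poly_Mapping.map (\<lambda>x. c * x) p"

definition mvar :: "nat \<Rightarrow> 'a::{zero,one} mpoly" where
  "mvar i = Poly_Mapping.single (Poly_Mapping.single i 1) 1"

definition mdeg :: "(nat \<Rightarrow>\<^sub>0 nat) \<Rightarrow> nat" where
  "mdeg m = (\<Sum>i\<in>Poly_Mapping.keys m. Poly_Mapping.lookup m i)"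

definition in_vars :: "nat \<Rightarrow> 'a::zero mpoly \<Rightarrow> bool" where
  "in_vars n p \<longleftrightarrow> (\<forall>m\<in>Poly_Mapping.keys p. Poly_Mapping.keys m \<subseteq> {..<n})"

text \<open>p is a form of degree j (0 is a form of every degree).\<close>
definition homog :: "nat \<Rightarrow> 'a::zero mpoly \<Rightarrow> bool" where
  "homog j p \<longleftrightarrow> (\<forall>m\<in>Poly_Mapping.keys p. mdeg m = j)"

definition gpart :: "nat \<Rightarrow> nat \<Rightarrow> 'a::zero mpoly set" where
  "gpart n j = {p. in_vars n p \<and> homog j p}"

definition ideal_gen :: "nat \<Rightarrow> (nat \<Rightarrow> 'a::field mpoly) \<Rightarrow> nat \<Rightarrow> 'a mpoly set" where
  "ideal_gen n F m = {(\<Sum>i<m. g i * F i) | g. \<forall>i<m. in_vars n (g i)}"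

lemma vector_space_mscale: "vector_space (mscale :: 'a::field \<Rightarrow> 'a mpoly \<Rightarrow> 'a mpoly)"
  apply unfold_locales
  apply (auto simp: mscale_def poly_mapping_eq_iff fun_eq_iff Poly_Mapping.map.rep_eq lookup_add when_def mult.assoc distrib_right)
  by (metis distrib_left mult_zero_right)+

definition kdim :: "'a::field mpoly set \<Rightarrow> nat" where
  "kdim S = vector_space.dim mscale S"

text \<open>Hilbert function of k[x_1,...,x_n]/I in degree j (I a homogeneous ideal):
dim_k of (R/I)_j = R_j/(I \<inter> R_j).\<close>
definition hilb_fun :: "nat \<Rightarrow> 'a::field mpoly set \<Rightarrow> nat \<Rightarrow> nat" where
  "hilb_fun n I j = kdim (gpart n j :: 'a mpoly set) - kdim (I \<inter> gpart n j)"

definition hilb_series :: "nat \<Rightarrow> 'a::field mpoly set \<Rightarrow> int fps" where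
  "hilb_series n I = Abs_fps (\<lambda>j. int (hilb_fun n I j))"

definition trunc_neg :: "int fps \<Rightarrow> int fps" where
  "trunc_neg a = Abs_fps (\<lambda>j. if (\<forall>i\<le>j. fps_nth a i \<ge> 0) then fps_nth a j else 0)"

text \<open>The power series 1/(1-t) = 1 + t + t^2 + ... with integer coefficients
(the inverse of 1 - t in Z[[t]]).\<close>
definition geom_fps :: "int fps" where
  "geom_fps = Abs_fps (\<lambda>_. 1)"

lemma geom_fps_inverse: "geom_fps * (1 - fps_X) = 1"
  by (simp add: geom_fps_def fps_eq_iff right_diff_distrib)

text \<open>Weak Lefschetz property of k[x_1,...,x_N]/I, elements of A_i represented by
forms of degree i modulo I.\<close>
definition WLP :: "nat \<Rightarrow> 'a::field mpoly set \<Rightarrow> bool" where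
  "WLP N I \<longleftrightarrow> (\<exists>l\<in>gpart N 1. \<forall>i.
      (\<forall>f\<in>gpart N i. l * f \<in> I \<longrightarrow> f \<in> I) \<or>
      (\<forall>g\<in>gpart N (Suc i). \<exists>f\<in>gpart N i. g - l * f \<in> I))"

end

theory Submission
  imports Defs
begin

lemma pm_expand:
  fixes p :: "'a \<Rightarrow>\<^sub>0 'b::comm_monoid_add"
  assumes "finite K" "Poly_Mapping.keys p \<subseteq> K"
  shows "p = (\<Sum>m\<in>K. Poly_Mapping.single m (Poly_Mapping.lookup p m))"
proof (rule poly_mapping_eqI)
  fix k
  have "(\<Sum>m\<in>K. Poly_Mapping.lookup (Poly_Mapping.single m (Poly_Mapping.lookup p m)) k)
      = (\<Sum>m\<in>K. if m = k then Poly_Mapping.lookup p m else 0)"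
    by (rule sum.cong) (auto simp: lookup_single)
  also have "\<dots> = Poly_Mapping.lookup p k"
    using assms by (cases "k \<in> K") (auto simp: in_keys_iff)
  finally show "Poly_Mapping.lookup p k = Poly_Mapping.lookup (\<Sum>m\<in>K. Poly_Mapping.single m (Poly_Mapping.lookup p m)) k"
    by (simp add: lookup_sum)
qed

lemma mscale_conv: "mscale c p = Poly_Mapping.single 0 c * p"
  by (simp add: mscale_def mult_map_scale_conv_mult)

lemma mdeg_K:
  assumes "finite K" "Poly_Mapping.keys m \<subseteq> K"
  shows "mdeg m = (\<Sum>i\<in>K. Poly_Mapping.lookup m i)"
  unfolding mdeg_def using assms
  by (intro sum.mono_neutral_left) (auto simp: in_keys_iff)

lemma mdeg_add: "mdeg (a + b) = mdeg a + mdeg b"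
proof -
  let ?K = "Poly_Mapping.keys a \<union> Poly_Mapping.keys b"
  have "mdeg (a+b) = (\<Sum>i\<in>?K. Poly_Mapping.lookup (a+b) i)"
    by (rule mdeg_K) (auto simp: in_keys_iff lookup_add)
  also have "\<dots> = (\<Sum>i\<in>?K. Poly_Mapping.lookup a i) + (\<Sum>i\<in>?K. Poly_Mapping.lookup b i)"
    by (simp add: lookup_add sum.distrib)
  also have "\<dots> = mdeg a + mdeg b"
    using mdeg_K[of ?K a] mdeg_K[of ?K b] by simp
  finally show ?thesis .
qed

lemma mdeg_0[simp]: "mdeg 0 = 0" by (simp add: mdeg_def)
lemma mdeg_single[simp]: "mdeg (Poly_Mapping.single i k) = k"
  by (simp add: mdeg_def)

lemma keys_minus_sub: "Poly_Mapping.keys (- p) = Poly_Mapping.keys (p::'a::ab_group_add mpoly)"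
  by (auto simp: in_keys_iff)

lemma keys_diff_sub: "Poly_Mapping.keys (p - q) \<subseteq> Poly_Mapping.keys p \<union> Poly_Mapping.keys (q::'a::ab_group_add mpoly)"
  by (auto simp: in_keys_iff lookup_minus)

lemma keys_sum_sub: "Poly_Mapping.keys (sum f A) \<subseteq> (\<Union>i\<in>A. Poly_Mapping.keys (f i))"
proof (induction A rule: infinite_finite_induct)
  case (insert x F) then show ?case using keys_add[of "f x" "sum f F"] by auto
qed auto

definition keysin :: "(nat \<Rightarrow>\<^sub>0 nat) set \<Rightarrow> 'a::zero mpoly set" where
  "keysin M = {p. Poly_Mapping.keys p \<subseteq> M}"

lemma keysin_0[simp]: "0 \<in> keysin M" by (simp add: keysin_def)
lemma keysin_add: "p \<in> keysin M \<Longrightarrow> q \<in> keysin M \<Longrightarrow> p + q \<in> keysin M"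
  unfolding keysin_def mem_Collect_eq using keys_add[of p q] by (meson le_sup_iff order_trans)
lemma keysin_uminus: "p \<in> keysin M \<Longrightarrow> - (p::'a::ab_group_add mpoly) \<in> keysin M"
  unfolding keysin_def by (auto simp: in_keys_iff)
lemma keysin_diff: "p \<in> keysin M \<Longrightarrow> q \<in> keysin M \<Longrightarrow> p - (q::'a::ab_group_add mpoly) \<in> keysin M"
  unfolding keysin_def mem_Collect_eq using keys_diff_sub[of p q] by (meson le_sup_iff order_trans)
lemma keysin_sum: "(\<And>i. i \<in> A \<Longrightarrow> f i \<in> keysin M) \<Longrightarrow> sum f A \<in> keysin M"
  unfolding keysin_def mem_Collect_eq using keys_sum_sub[of f A] by (meson UN_least order_trans)
lemma keysin_single: "m \<in> M \<Longrightarrow> Poly_Mapping.single m c \<in> keysin M"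
  unfolding keysin_def by simp
lemma keysin_mult:
  assumes "p \<in> keysin A" "q \<in> keysin B" "\<And>a b. a \<in> A \<Longrightarrow> b \<in> B \<Longrightarrow> a + b \<in> C"
  shows "p * (q::'a::comm_ring_1 mpoly) \<in> keysin C"
  using assms keys_mult[of p q] unfolding keysin_def by fastforce

lemma in_vars_keysin: "in_vars n p \<longleftrightarrow> p \<in> keysin {m. Poly_Mapping.keys m \<subseteq> {..<n}}"
  by (auto simp: in_vars_def keysin_def)
lemma homog_keysin: "homog j p \<longleftrightarrow> p \<in> keysin {m. mdeg m = j}"
  by (auto simp: homog_def keysin_def)
lemma gpart_keysin: "gpart n j = keysin {m. Poly_Mapping.keys m \<subseteq> {..<n} \<and> mdeg m = j}"
  by (auto simp: gpart_def in_vars_def homog_def keysin_def)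

lemma keys_add_nat: "Poly_Mapping.keys (a + b) = Poly_Mapping.keys a \<union> Poly_Mapping.keys (b::'x \<Rightarrow>\<^sub>0 nat)"
  by (auto simp: in_keys_iff lookup_add)

lemma gpart_0[simp]: "0 \<in> gpart n j" by (simp add: gpart_keysin)
lemma gpart_add: "p \<in> gpart n j \<Longrightarrow> q \<in> gpart n j \<Longrightarrow> p + q \<in> gpart n j"
  by (simp add: gpart_keysin keysin_add)
lemma gpart_diff: "p \<in> gpart n j \<Longrightarrow> q \<in> gpart n j \<Longrightarrow> p - (q::'a::ab_group_add mpoly) \<in> gpart n j"
  by (simp add: gpart_keysin keysin_diff)
lemma gpart_uminus: "p \<in> gpart n j \<Longrightarrow> - (p::'a::ab_group_add mpoly) \<in> gpart n j"
  by (simp add: gpart_keysin keysin_uminus)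
lemma gpart_sum: "(\<And>i. i \<in> A \<Longrightarrow> f i \<in> gpart n j) \<Longrightarrow> sum f A \<in> gpart n j"
  by (simp add: gpart_keysin keysin_sum)
lemma gpart_mult: "p \<in> gpart n a \<Longrightarrow> q \<in> gpart n b \<Longrightarrow> p * (q::'a::comm_ring_1 mpoly) \<in> gpart n (a + b)"
  unfolding gpart_keysin
  by (erule keysin_mult, assumption) (auto simp: mdeg_add keys_add_nat)
lemma gpart_one: "(1::'a::comm_ring_1 mpoly) \<in> gpart n 0"
  by (simp add: gpart_keysin keysin_def)
lemma gpart_single: "Poly_Mapping.keys m \<subseteq> {..<n} \<Longrightarrow> Poly_Mapping.single m c \<in> gpart n (mdeg m)"
  by (simp add: gpart_keysin keysin_single)
lemma gpart_const: "Poly_Mapping.single 0 c \<in> gpart n 0"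
  using gpart_single[of 0 n c] by simp
lemma gpart_mscale: "p \<in> gpart n j \<Longrightarrow> mscale c p \<in> gpart n j"
  using gpart_mult[OF gpart_const] by (simp add: mscale_conv)
lemma gpart_power: "p \<in> gpart n 1 \<Longrightarrow> (p::'a::comm_ring_1 mpoly) ^ k \<in> gpart n k"
  by (induction k) (auto simp: gpart_one dest: gpart_mult)
lemma mvar_gpart: "i < n \<Longrightarrow> (mvar i :: 'a::comm_ring_1 mpoly) \<in> gpart n 1"
  unfolding mvar_def using gpart_single[of "Poly_Mapping.single i 1" n 1] by simp

lemma in_vars_0[simp]: "in_vars n 0" by (simp add: in_vars_keysin)
lemma in_vars_add: "in_vars n p \<Longrightarrow> in_vars n q \<Longrightarrow> in_vars n (p + q)"
  by (simp add: in_vars_keysin keysin_add)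
lemma in_vars_diff: "in_vars n p \<Longrightarrow> in_vars n q \<Longrightarrow> in_vars n (p - (q::'a::ab_group_add mpoly))"
  by (simp add: in_vars_keysin keysin_diff)
lemma in_vars_uminus: "in_vars n p \<Longrightarrow> in_vars n (- (p::'a::ab_group_add mpoly))"
  by (simp add: in_vars_keysin keysin_uminus)
lemma in_vars_sum: "(\<And>i. i \<in> A \<Longrightarrow> in_vars n (f i)) \<Longrightarrow> in_vars n (sum f A)"
  by (simp add: in_vars_keysin keysin_sum)
lemma in_vars_mult: "in_vars n p \<Longrightarrow> in_vars n q \<Longrightarrow> in_vars n (p * (q::'a::comm_ring_1 mpoly))"
  unfolding in_vars_keysin
  by (erule keysin_mult, assumption) (auto simp: keys_add_nat)
lemma in_vars_one: "in_vars n (1::'a::comm_ring_1 mpoly)"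
  by (auto simp: in_vars_def keys_one)
lemma in_vars_const: "in_vars n (Poly_Mapping.single 0 c)"
  by (simp add: in_vars_def)
lemma in_vars_power: "in_vars n p \<Longrightarrow> in_vars n (p ^ k :: 'a::comm_ring_1 mpoly)"
  by (induction k) (auto simp: in_vars_one in_vars_mult)
lemma in_vars_prod: "(\<And>i. i \<in> A \<Longrightarrow> in_vars n (f i)) \<Longrightarrow> in_vars n (prod f A :: 'a::comm_ring_1 mpoly)"
  by (induction A rule: infinite_finite_induct) (auto simp: in_vars_one in_vars_mult)
lemma in_vars_mono: "in_vars n p \<Longrightarrow> n \<le> n' \<Longrightarrow> in_vars n' p"
  unfolding in_vars_def by (meson lessThan_subset_iff subset_trans)
lemma gpart_in_vars: "p \<in> gpart n j \<Longrightarrow> in_vars n p" by (simp add: gpart_def)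

lemma homog_0[simp]: "homog j 0" by (simp add: homog_def)
lemma homog_add: "homog j p \<Longrightarrow> homog j q \<Longrightarrow> homog j (p + q)"
  by (simp add: homog_keysin keysin_add)
lemma homog_sum: "(\<And>i. i \<in> A \<Longrightarrow> homog j (f i)) \<Longrightarrow> homog j (sum f A)"
  by (simp add: homog_keysin keysin_sum)
lemma homog_mult: "homog a p \<Longrightarrow> homog b q \<Longrightarrow> homog (a+b) (p * (q::'a::comm_ring_1 mpoly))"
  unfolding homog_keysin
  by (erule keysin_mult, assumption) (auto simp: mdeg_add)
lemma homog_one: "homog 0 (1::'a::comm_ring_1 mpoly)"
  by (auto simp: homog_def keys_one)
lemma homog_power: "homog 1 p \<Longrightarrow> homog k (p ^ k :: 'a::comm_ring_1 mpoly)"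
  by (induction k) (auto simp: homog_one dest: homog_mult)
lemma homog_prod: "finite A \<Longrightarrow> (\<And>i. i \<in> A \<Longrightarrow> homog (e i) (f i)) \<Longrightarrow> homog (sum e A) (prod f A :: 'a::comm_ring_1 mpoly)"
  by (induction A rule: finite_induct) (auto simp: homog_one homog_mult)
lemma homog_single: "homog (mdeg m) (Poly_Mapping.single m c)"
  by (simp add: homog_def)
lemma gpart_iff: "p \<in> gpart n j \<longleftrightarrow> in_vars n p \<and> homog j p" by (simp add: gpart_def)

definition mmono :: "(nat \<Rightarrow> 'a::comm_ring_1 mpoly) \<Rightarrow> (nat \<Rightarrow>\<^sub>0 nat) \<Rightarrow> 'a mpoly" where
  "mmono \<sigma> m = (\<Prod>i\<in>Poly_Mapping.keys m. \<sigma> i ^ Poly_Mapping.lookup m i)"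

definition subst :: "(nat \<Rightarrow> 'a::comm_ring_1 mpoly) \<Rightarrow> 'a mpoly \<Rightarrow> 'a mpoly" where
  "subst \<sigma> p = (\<Sum>m\<in>Poly_Mapping.keys p. Poly_Mapping.single 0 (Poly_Mapping.lookup p m) * mmono \<sigma> m)"

abbreviation C :: "'a \<Rightarrow> 'a::comm_ring_1 mpoly" where "C c \<equiv> Poly_Mapping.single 0 c"

lemma C_mult: "C (a * b) = C a * C b"
  by (simp add: mult_single)
lemma C_add: "C (a + b) = C a + C b"
  by (simp add: single_add)
lemma C_0: "C 0 = 0" by simp
lemma C_1: "C 1 = 1" by simp

lemma mmono_K:
  assumes "finite K" "Poly_Mapping.keys m \<subseteq> K"
  shows "mmono \<sigma> m = (\<Prod>i\<in>K. \<sigma> i ^ Poly_Mapping.lookup m i)"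
  unfolding mmono_def using assms
  by (intro prod.mono_neutral_left) (auto simp: in_keys_iff)

lemma mmono_add: "mmono \<sigma> (a + b) = mmono \<sigma> a * mmono \<sigma> b"
proof -
  let ?K = "Poly_Mapping.keys a \<union> Poly_Mapping.keys b"
  have "mmono \<sigma> (a+b) = (\<Prod>i\<in>?K. \<sigma> i ^ Poly_Mapping.lookup (a+b) i)"
    by (rule mmono_K) (auto simp: keys_add_nat)
  also have "\<dots> = (\<Prod>i\<in>?K. \<sigma> i ^ Poly_Mapping.lookup a i) * (\<Prod>i\<in>?K. \<sigma> i ^ Poly_Mapping.lookup b i)"
    by (simp add: lookup_add power_add prod.distrib)
  also have "\<dots> = mmono \<sigma> a * mmono \<sigma> b"
    using mmono_K[of ?K a \<sigma>] mmono_K[of ?K b \<sigma>] by simp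
  finally show ?thesis .
qed

lemma mmono_0[simp]: "mmono \<sigma> 0 = 1" by (simp add: mmono_def)

lemma subst_K:
  assumes "finite K" "Poly_Mapping.keys p \<subseteq> K"
  shows "subst \<sigma> p = (\<Sum>m\<in>K. C (Poly_Mapping.lookup p m) * mmono \<sigma> m)"
  unfolding subst_def using assms
  by (intro sum.mono_neutral_left) (auto simp: in_keys_iff)

lemma subst_add: "subst \<sigma> (p + q) = subst \<sigma> p + subst \<sigma> q"
proof -
  let ?K = "Poly_Mapping.keys p \<union> Poly_Mapping.keys q"
  have "subst \<sigma> (p+q) = (\<Sum>m\<in>?K. C (Poly_Mapping.lookup (p+q) m) * mmono \<sigma> m)"
    by (rule subst_K) (use keys_add[of p q] in auto)
  also have "\<dots> = (\<Sum>m\<in>?K. C (Poly_Mapping.lookup p m) * mmono \<sigma> m) + (\<Sum>m\<in>?K. C (Poly_Mapping.lookup q m) * mmono \<sigma> m)"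
    by (simp add: lookup_add C_add distrib_right sum.distrib)
  also have "\<dots> = subst \<sigma> p + subst \<sigma> q"
    using subst_K[of ?K p \<sigma>] subst_K[of ?K q \<sigma>] by simp
  finally show ?thesis .
qed

lemma subst_0[simp]: "subst \<sigma> 0 = 0" by (simp add: subst_def)

lemma subst_single: "subst \<sigma> (Poly_Mapping.single m c) = C c * mmono \<sigma> m"
  by (subst subst_K[of "{m}"]) auto

lemma subst_sum: "subst \<sigma> (sum f A) = (\<Sum>a\<in>A. subst \<sigma> (f a))"
  by (induction A rule: infinite_finite_induct) (auto simp: subst_add)

lemma subst_uminus: "subst \<sigma> (- p) = - subst \<sigma> p"
  using subst_add[of \<sigma> "-p" p] by (simp add: eq_neg_iff_add_eq_0)

lemma subst_diff: "subst \<sigma> (p - q) = subst \<sigma> p - subst \<sigma> q"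
  using subst_add[of \<sigma> p "-q"] by (simp add: subst_uminus)

lemma mult_expand:
  fixes p q :: "'a::comm_ring_1 mpoly"
  shows "p * q = (\<Sum>a\<in>Poly_Mapping.keys p. \<Sum>b\<in>Poly_Mapping.keys q.
                  Poly_Mapping.single (a + b) (Poly_Mapping.lookup p a * Poly_Mapping.lookup q b))"
proof -
  have "p * q = (\<Sum>a\<in>Poly_Mapping.keys p. Poly_Mapping.single a (Poly_Mapping.lookup p a)) *
                (\<Sum>b\<in>Poly_Mapping.keys q. Poly_Mapping.single b (Poly_Mapping.lookup q b))"
    using pm_expand[of "Poly_Mapping.keys p" p] pm_expand[of "Poly_Mapping.keys q" q] by simp
  also have "\<dots> = (\<Sum>a\<in>Poly_Mapping.keys p. \<Sum>b\<in>Poly_Mapping.keys q.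
                  Poly_Mapping.single (a + b) (Poly_Mapping.lookup p a * Poly_Mapping.lookup q b))"
    by (simp add: sum_product mult_single)
  finally show ?thesis .
qed

lemma subst_mult: "subst \<sigma> (p * q) = subst \<sigma> p * subst \<sigma> q"
proof -
  have "subst \<sigma> (p * q) = (\<Sum>a\<in>Poly_Mapping.keys p. \<Sum>b\<in>Poly_Mapping.keys q.
           C (Poly_Mapping.lookup p a) * mmono \<sigma> a * (C (Poly_Mapping.lookup q b) * mmono \<sigma> b))"
    by (subst mult_expand) (simp add: subst_sum subst_single mmono_add C_mult ac_simps)
  also have "\<dots> = subst \<sigma> p * subst \<sigma> q"
    by (simp add: subst_def sum_product)
  finally show ?thesis .
qed

lemma subst_C[simp]: "subst \<sigma> (C c) = C c"
  by (simp add: subst_single)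
lemma subst_1[simp]: "subst \<sigma> 1 = 1"
  using subst_C[of \<sigma> 1] by simp
lemma subst_mscale: "subst \<sigma> (mscale c p) = mscale c (subst \<sigma> p)"
  by (simp add: mscale_conv subst_mult)
lemma subst_power: "subst \<sigma> (p ^ k) = subst \<sigma> p ^ k"
  by (induction k) (auto simp: subst_mult)
lemma subst_prod: "subst \<sigma> (prod f A) = (\<Prod>a\<in>A. subst \<sigma> (f a))"
  by (induction A rule: infinite_finite_induct) (auto simp: subst_mult)
lemma subst_mvar[simp]: "subst \<sigma> (mvar i) = \<sigma> i"
  by (simp add: mvar_def subst_single mmono_def)

lemma single_var_power: "(Poly_Mapping.single (Poly_Mapping.single i 1) (1::'a::comm_ring_1)) ^ e
    = Poly_Mapping.single (Poly_Mapping.single i e) 1"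
  by (induction e) (auto simp: mult_single single_add[symmetric])

lemma prod_single_one: "(\<Prod>i\<in>A. Poly_Mapping.single (f i) (1::'a::comm_ring_1)) = Poly_Mapping.single (\<Sum>i\<in>A. f i) 1"
  by (induction A rule: infinite_finite_induct) (auto simp: mult_single)

lemma mmono_mvar: "mmono mvar m = (Poly_Mapping.single m (1::'a::comm_ring_1))"
proof -
  have "mmono mvar m = (\<Prod>i\<in>Poly_Mapping.keys m. Poly_Mapping.single (Poly_Mapping.single i (Poly_Mapping.lookup m i)) (1::'a))"
    unfolding mmono_def mvar_def single_var_power ..
  also have "\<dots> = Poly_Mapping.single (\<Sum>i\<in>Poly_Mapping.keys m. Poly_Mapping.single i (Poly_Mapping.lookup m i)) 1"
    by (rule prod_single_one)
  also have "\<dots> = Poly_Mapping.single m 1"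
    using pm_expand[of "Poly_Mapping.keys m" m] by simp
  finally show ?thesis .
qed

lemma subst_id: "subst mvar p = (p::'a::comm_ring_1 mpoly)"
proof -
  have "subst mvar p = (\<Sum>m\<in>Poly_Mapping.keys p. Poly_Mapping.single m (Poly_Mapping.lookup p m))"
    by (simp add: subst_def mmono_mvar mult_single)
  also have "\<dots> = p" using pm_expand[of "Poly_Mapping.keys p" p] by simp
  finally show ?thesis .
qed

lemma subst_comp: "subst \<sigma> (subst \<tau> p) = subst (\<lambda>i. subst \<sigma> (\<tau> i)) p"
proof -
  have "subst \<sigma> (subst \<tau> p) = (\<Sum>m\<in>Poly_Mapping.keys p. subst \<sigma> (C (Poly_Mapping.lookup p m) * mmono \<tau> m))"
    unfolding subst_def[of \<tau>] by (rule subst_sum)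
  also have "\<dots> = (\<Sum>m\<in>Poly_Mapping.keys p. C (Poly_Mapping.lookup p m) * mmono (\<lambda>i. subst \<sigma> (\<tau> i)) m)"
    by (simp add: subst_mult mmono_def subst_prod subst_power)
  also have "\<dots> = subst (\<lambda>i. subst \<sigma> (\<tau> i)) p"
    by (simp add: subst_def)
  finally show ?thesis .
qed

lemma subst_cong:
  assumes "in_vars n p" "\<And>i. i < n \<Longrightarrow> \<sigma> i = \<tau> i"
  shows "subst \<sigma> p = subst \<tau> p"
  unfolding subst_def mmono_def
  using assms unfolding in_vars_def
  by (intro sum.cong refl arg_cong2[where f="(*)"] prod.cong) (metis lessThan_iff subsetD)

lemma in_vars_subst:
  assumes "in_vars N p" "\<And>i. i < N \<Longrightarrow> in_vars n (\<sigma> i)"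
  shows "in_vars n (subst \<sigma> p)"
  unfolding subst_def mmono_def using assms unfolding in_vars_def[of N]
  by (auto intro!: in_vars_sum in_vars_mult in_vars_const in_vars_prod in_vars_power)

lemma homog_mmono:
  assumes "Poly_Mapping.keys m \<subseteq> {..<N}" "\<And>i. i < N \<Longrightarrow> homog 1 (\<sigma> i)"
  shows "homog (mdeg m) (mmono \<sigma> m)"
  unfolding mmono_def mdeg_def using assms
  by (intro homog_prod finite_keys homog_power) (meson assms lessThan_iff subsetD)

lemma gpart_subst:
  assumes "p \<in> gpart N j" "\<And>i. i < N \<Longrightarrow> \<sigma> i \<in> gpart n 1"
  shows "subst \<sigma> p \<in> gpart n j"
proof -
  have "homog j (subst \<sigma> p)"
    unfolding subst_def
  proof (intro homog_sum)
    fix m assume m: "m \<in> Poly_Mapping.keys p"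
    then have "Poly_Mapping.keys m \<subseteq> {..<N}" "mdeg m = j" using assms(1) by (auto simp: gpart_def in_vars_def homog_def)
    then show "homog j (C (Poly_Mapping.lookup p m) * mmono \<sigma> m)"
      using homog_mult[OF homog_single[of 0] homog_mmono[of m N \<sigma>]] assms(2) by (auto simp: gpart_def)
  qed
  moreover have "in_vars n (subst \<sigma> p)"
    using assms by (intro in_vars_subst[of N]) (auto simp: gpart_def)
  ultimately show ?thesis by (simp add: gpart_def)
qed

lift_definition hc :: "nat \<Rightarrow> 'a::zero mpoly \<Rightarrow> 'a mpoly" is
  "\<lambda>j p m. if mdeg m = j then p m else 0"
proof -
  fix j and p :: "(nat \<Rightarrow>\<^sub>0 nat) \<Rightarrow> 'a"
  assume "finite {x. p x \<noteq> 0}"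
  then show "finite {x. (if mdeg x = j then p x else 0) \<noteq> 0}"
    by (rule finite_subset[rotated]) auto
qed

lemma lookup_hc: "Poly_Mapping.lookup (hc j p) m = (if mdeg m = j then Poly_Mapping.lookup p m else 0)"
  by transfer simp

lemma keys_hc: "Poly_Mapping.keys (hc j p) \<subseteq> Poly_Mapping.keys p"
  by (auto simp: in_keys_iff lookup_hc split: if_splits)

lemma homog_hc: "homog j (hc j p)"
  by (auto simp: homog_def in_keys_iff lookup_hc split: if_splits)

lemma in_vars_hc: "in_vars n p \<Longrightarrow> in_vars n (hc j p)"
  using keys_hc unfolding in_vars_def by blast

lemma gpart_hc: "in_vars n p \<Longrightarrow> hc j p \<in> gpart n j"
  by (simp add: gpart_def in_vars_hc homog_hc)

lemma hc_add: "hc j (p + q) = hc j p + hc j (q::'a::comm_monoid_add mpoly)"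
  by (rule poly_mapping_eqI) (simp add: lookup_hc lookup_add)

lemma hc_0[simp]: "hc j 0 = 0"
  by (rule poly_mapping_eqI) (simp add: lookup_hc)

lemma hc_sum: "hc j (sum f A) = (\<Sum>a\<in>A. hc j (f a :: 'a::comm_monoid_add mpoly))"
  by (induction A rule: infinite_finite_induct) (auto simp: hc_add)

lemma hc_homog: "homog j p \<Longrightarrow> hc j p = p"
  by (rule poly_mapping_eqI) (auto simp: lookup_hc homog_def in_keys_iff)

lemma hc_homog_other: "homog e p \<Longrightarrow> e \<noteq> j \<Longrightarrow> hc j p = 0"
  by (rule poly_mapping_eqI) (auto simp: lookup_hc homog_def in_keys_iff)

lemma hc_single: "hc j (Poly_Mapping.single m c) = (if mdeg m = j then Poly_Mapping.single m c else 0)"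
  using hc_homog[OF homog_single] hc_homog_other[OF homog_single] by auto

lemma hc_mult_homog:
  fixes p q :: "'a::comm_ring_1 mpoly"
  assumes "homog e q"
  shows "hc j (p * q) = (if e \<le> j then hc (j - e) p * q else 0)"
proof -
  have deg: "b \<in> Poly_Mapping.keys q \<Longrightarrow> mdeg b = e" for b using assms by (auto simp: homog_def)
  have "hc j (p * q) = (\<Sum>a\<in>Poly_Mapping.keys p. \<Sum>b\<in>Poly_Mapping.keys q.
      if mdeg a + e = j then Poly_Mapping.single (a + b) (Poly_Mapping.lookup p a * Poly_Mapping.lookup q b) else 0)"
    by (subst mult_expand) (auto simp: hc_sum hc_single mdeg_add deg intro!: sum.cong)
  also have "\<dots> = (if e \<le> j then hc (j - e) p * q else 0)"
  proof (cases "e \<le> j")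
    case True
    have "hc (j - e) p * q = (\<Sum>a\<in>Poly_Mapping.keys p. \<Sum>b\<in>Poly_Mapping.keys q.
      if mdeg a = j - e then Poly_Mapping.single (a + b) (Poly_Mapping.lookup p a * Poly_Mapping.lookup q b) else 0)"
    proof -
      have "hc (j - e) p = (\<Sum>a\<in>Poly_Mapping.keys p. hc (j-e) (Poly_Mapping.single a (Poly_Mapping.lookup p a)))"
        using pm_expand[of "Poly_Mapping.keys p" p] by (metis finite_keys hc_sum order_refl)
      also have "\<dots> = (\<Sum>a\<in>Poly_Mapping.keys p. if mdeg a = j - e then Poly_Mapping.single a (Poly_Mapping.lookup p a) else 0)"
        by (simp add: hc_single)
      finally have 1: "hc (j - e) p = \<dots>" .
      have 2: "q = (\<Sum>b\<in>Poly_Mapping.keys q. Poly_Mapping.single b (Poly_Mapping.lookup q b))"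
        using pm_expand[of "Poly_Mapping.keys q" q] by simp
      show ?thesis
        apply (subst 1, subst (1) 2)
        by (simp add: sum_product) (auto intro!: sum.cong simp: mult_single)
    qed
    then show ?thesis using True by (auto intro!: sum.cong)
  next
    case False then show ?thesis by auto
  qed
  finally show ?thesis .
qed

lemma subst_hc:
  assumes "in_vars N p" "\<And>i. i < N \<Longrightarrow> homog 1 (\<sigma> i)"
  shows "subst \<sigma> (hc j p) = hc j (subst \<sigma> p)"
proof -
  have hm: "m \<in> Poly_Mapping.keys p \<Longrightarrow> homog (mdeg m) (C c * mmono \<sigma> m)" for m c
    using homog_mult[OF homog_single[of 0] homog_mmono[of m N \<sigma>]] assms by (auto simp: in_vars_def)
  have e: "p = (\<Sum>m\<in>Poly_Mapping.keys p. Poly_Mapping.single m (Poly_Mapping.lookup p m))"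
    using pm_expand[of "Poly_Mapping.keys p" p] by simp
  have "subst \<sigma> (hc j p) = (\<Sum>m\<in>Poly_Mapping.keys p. if mdeg m = j then C (Poly_Mapping.lookup p m) * mmono \<sigma> m else 0)"
    by (subst e) (simp add: hc_sum hc_single subst_sum subst_single if_distrib cong: if_cong)
  also have "\<dots> = (\<Sum>m\<in>Poly_Mapping.keys p. hc j (C (Poly_Mapping.lookup p m) * mmono \<sigma> m))"
    by (intro sum.cong refl) (auto simp: hc_homog[OF hm] hc_homog_other[OF hm])
  also have "\<dots> = hc j (subst \<sigma> p)"
    by (simp add: subst_def hc_sum)
  finally show ?thesis .
qed

interpretation V: vector_space "mscale :: 'a::field \<Rightarrow> 'a mpoly \<Rightarrow> 'a mpoly"
  by (rule vector_space_mscale)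

lemma kdim_V: "kdim S = V.dim S" by (simp add: kdim_def)

lemma linear_mscaleI:
  assumes "\<And>x y. T (x + y) = T x + T y" "\<And>c x. T (mscale c x) = mscale c (T x)"
  shows "Vector_Spaces.linear mscale mscale (T :: 'a::field mpoly \<Rightarrow> 'a mpoly)"
  using assms vector_space_mscale by (simp add: Vector_Spaces.linear_iff)

lemma linear_subst: "Vector_Spaces.linear mscale mscale (subst (\<sigma> :: nat \<Rightarrow> 'a::field mpoly))"
  by (rule linear_mscaleI) (auto simp: subst_add subst_mscale)

lemma linear_multl: "Vector_Spaces.linear mscale mscale (\<lambda>x. (l :: 'a::field mpoly) * x)"
  by (rule linear_mscaleI) (simp_all add: mscale_conv distrib_left mult.left_commute)

lemma disjoint_spans_zero:
  fixes B :: "'a::field mpoly set"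
  assumes "V.independent B" "finite B" "A \<subseteq> B" "x \<in> V.span A" "x \<in> V.span (B - A)"
  shows "x = 0"
proof -
  have fA: "finite A" "finite (B - A)" using assms finite_subset by auto
  obtain u where u: "x = (\<Sum>v\<in>A. mscale (u v) v)" using assms(4) V.span_finite[OF fA(1)] by auto
  obtain w where w: "x = (\<Sum>v\<in>B - A. mscale (w v) v)" using assms(5) V.span_finite[OF fA(2)] by auto
  define r where "r v = (if v \<in> A then u v else - w v)" for v
  have "(\<Sum>v\<in>B. mscale (r v) v) = (\<Sum>v\<in>A. mscale (r v) v) + (\<Sum>v\<in>B - A. mscale (r v) v)"
    using sum.subset_diff[OF assms(3,2)] by (simp add: add.commute)
  also have "\<dots> = (\<Sum>v\<in>A. mscale (u v) v) + (\<Sum>v\<in>B - A. mscale (- w v) v)"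
    by (intro arg_cong2[where f="(+)"] sum.cong refl) (auto simp: r_def)
  also have "\<dots> = x - x"
    unfolding V.scale_minus_left sum_negf u[symmetric] w[symmetric] by simp
  finally have "(\<Sum>v\<in>B. mscale (r v) v) = 0" by simp
  then have "\<forall>v\<in>B. r v = 0" using assms(1) V.dependent_finite[OF assms(2)] by blast
  then have "\<forall>v\<in>A. u v = 0" using assms(3) unfolding r_def by (metis subsetD)
  then show ?thesis using u by simp
qed

lemma finite_dim_basis:
  fixes U :: "'a::field mpoly set"
  assumes "U \<subseteq> V.span F" "finite F"
  obtains B where "B \<subseteq> U" "V.independent B" "U \<subseteq> V.span B" "card B = V.dim U" "finite B"
proof -
  obtain B where B: "B \<subseteq> U" "V.independent B" "U \<subseteq> V.span B" "card B = V.dim U"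
    using V.basis_exists by blast
  moreover have "finite B"
    using V.independent_span_bound[OF assms(2) B(2)] B(1) assms(1) by auto
  ultimately show ?thesis using that by blast
qed

lemma dim_mono_fin:
  fixes A B :: "'a::field mpoly set"
  assumes "A \<subseteq> B" "B \<subseteq> V.span F" "finite F"
  shows "V.dim A \<le> V.dim B"
proof -
  obtain C where C: "C \<subseteq> B" "V.independent C" "B \<subseteq> V.span C" "card C = V.dim B" "finite C"
    using finite_dim_basis[OF assms(2,3)] by blast
  show ?thesis using V.dim_le_card[of A C] C assms(1) by auto
qed

lemma rank_nullity:
  fixes T :: "'a::field mpoly \<Rightarrow> 'a mpoly"
  assumes U: "V.subspace U" "U \<subseteq> V.span F" "finite F" and lin: "Vector_Spaces.linear mscale mscale T"
  shows "V.dim (T ` U) + V.dim {x\<in>U. T x = 0} = V.dim U"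
proof -
  interpret L: Vector_Spaces.linear mscale mscale T by (rule lin)
  let ?Z = "{x\<in>U. T x = 0}"
  obtain B0 where B0: "B0 \<subseteq> ?Z" "V.independent B0" "?Z \<subseteq> V.span B0" "card B0 = V.dim ?Z"
    using V.basis_exists by blast
  obtain B where B: "B0 \<subseteq> B" "B \<subseteq> U" "V.independent B" "U \<subseteq> V.span B"
  proof -
    have "B0 \<subseteq> U" using B0(1) by blast
    then show ?thesis using V.maximal_independent_subset_extend[of B0 U] B0(2) that by blast
  qed
  have fB: "finite B" using V.independent_span_bound[OF U(3) B(3)] B(2) U(2) by (meson order_trans)
  have cB: "card B = V.dim U" using V.basis_card_eq_dim[OF B(2,4,3)] .
  define C where "C = B - B0"
  have cardB: "card B = card B0 + card C"
  proof -
    have f0: "finite B0" using fB B(1) finite_subset by blast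
    show ?thesis unfolding C_def using card_Diff_subset[OF f0 B(1)] card_mono[OF fB B(1)] by simp
  qed
  have spanC: "V.span C \<subseteq> U"
    using B(2) U(1) unfolding C_def by (meson Diff_subset V.span_minimal order_trans)
  have inj: "inj_on T (V.span C)"
    unfolding L.inj_on_iff_eq_0[OF V.subspace_span]
  proof (intro ballI impI)
    fix x assume x: "x \<in> V.span C" "T x = 0"
    then have "x \<in> V.span B0" using spanC B0(3) by auto
    then show "x = 0"
      using disjoint_spans_zero[OF B(3) fB B(1)] x(1) unfolding C_def by auto
  qed
  have indC: "V.independent C" using B(3) V.independent_mono unfolding C_def by blast
  have indTC: "V.independent (T ` C)"
    using L.independent_injective_image[OF indC inj] .
  have TB0: "T ` B0 \<subseteq> {0}" using B0(1) by auto
  have "T ` U \<subseteq> V.span (T ` C)"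
  proof
    fix y assume "y \<in> T ` U"
    then obtain x where "x \<in> U" "y = T x" by auto
    then have "y \<in> T ` V.span B" using B(4) by auto
    also have "\<dots> = V.span (T ` B)" by (simp add: L.span_image)
    also have "T ` B = T ` C \<union> T ` B0" unfolding C_def image_Un[symmetric] using B(1)
      by (simp add: Un_absorb2)
    also have "V.span (T ` C \<union> T ` B0) \<subseteq> V.span (T ` C)"
    proof (intro V.span_minimal V.subspace_span)
      show "T ` C \<union> T ` B0 \<subseteq> V.span (T ` C)"
      proof (rule Un_least[OF V.span_superset])
        show "T ` B0 \<subseteq> V.span (T ` C)" using TB0 V.span_zero[of "T ` C"] by (metis singletonD subsetI subset_iff)
      qed
    qed
    finally show "y \<in> V.span (T ` C)" .
  qed
  moreover have "T ` C \<subseteq> T ` U" using B(2) unfolding C_def by auto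
  ultimately have "card (T ` C) = V.dim (T ` U)"
    using V.basis_card_eq_dim[of "T ` C" "T ` U"] indTC by blast
  moreover have "card (T ` C) = card C"
    by (rule card_image, rule inj_on_subset[OF inj V.span_superset])
  ultimately show ?thesis using cardB cB B0(4) by simp
qed

definition MS :: "nat \<Rightarrow> nat \<Rightarrow> (nat \<Rightarrow>\<^sub>0 nat) set" where
  "MS N j = {m. Poly_Mapping.keys m \<subseteq> {..<N} \<and> mdeg m = j}"

abbreviation X :: "(nat \<Rightarrow>\<^sub>0 nat) \<Rightarrow> 'a::comm_ring_1 mpoly" where
  "X m \<equiv> Poly_Mapping.single m 1"

lemma lookup_le_mdeg: "Poly_Mapping.lookup m i \<le> mdeg m"
proof (cases "i \<in> Poly_Mapping.keys m")
  case True then show ?thesis unfolding mdeg_def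
    by (intro member_le_sum) auto
qed (auto simp: in_keys_iff)

lemma finite_MS: "finite (MS N j)"
proof -
  have "Poly_Mapping.lookup ` MS N j \<subseteq> {f. \<forall>x. (x \<in> {..<N} \<longrightarrow> f x \<in> {..j}) \<and> (x \<notin> {..<N} \<longrightarrow> f x = 0)}"
  proof (rule image_subsetI)
    fix m assume m: "m \<in> MS N j"
    show "Poly_Mapping.lookup m \<in> {f. \<forall>x. (x \<in> {..<N} \<longrightarrow> f x \<in> {..j}) \<and> (x \<notin> {..<N} \<longrightarrow> f x = 0)}"
    proof (intro CollectI allI conjI impI)
      fix x show "Poly_Mapping.lookup m x \<in> {..j}" using lookup_le_mdeg[of m x] m by (simp add: MS_def)
    next
      fix x assume "x \<notin> {..<N}" then show "Poly_Mapping.lookup m x = 0"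
        using m by (simp add: MS_def in_keys_iff subset_iff) (metis neq0_conv)
    qed
  qed
  moreover have "finite {f. \<forall>x. (x \<in> {..<N} \<longrightarrow> f x \<in> {..j}) \<and> (x \<notin> {..<N} \<longrightarrow> f x = (0::nat))}"
    by (rule finite_set_of_finite_funs) auto
  ultimately have "finite (Poly_Mapping.lookup ` MS N j)" by (rule finite_subset)
  moreover have "inj_on Poly_Mapping.lookup (MS N j)"
    by (auto intro!: inj_onI poly_mapping_eqI)
  ultimately show ?thesis using finite_imageD by blast
qed

lemma X_mult: "X a * X b = (X (a + b) :: 'a::comm_ring_1 mpoly)"
  by (simp add: mult_single)

lemma expand_mscale:
  "p = (\<Sum>m\<in>Poly_Mapping.keys p. mscale (Poly_Mapping.lookup p m) (X m :: 'a::field mpoly))"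
proof -
  have "p = (\<Sum>m\<in>Poly_Mapping.keys p. Poly_Mapping.single m (Poly_Mapping.lookup p m))"
    using pm_expand[of "Poly_Mapping.keys p" p] by simp
  also have "\<dots> = (\<Sum>m\<in>Poly_Mapping.keys p. mscale (Poly_Mapping.lookup p m) (X m :: 'a::field mpoly))"
    by (simp add: mscale_conv mult_single)
  finally show ?thesis .
qed

lemma in_span_keys:
  assumes "Poly_Mapping.keys p \<subseteq> A"
  shows "(p :: 'a::field mpoly) \<in> V.span (X ` A)"
  apply (subst expand_mscale)
  apply (rule V.span_sum)
  apply (rule V.span_scale)
  apply (rule V.span_base)
  using assms by auto

lemma independent_X: "V.independent (X ` A :: 'a::field mpoly set)"
  unfolding V.independent_explicit_finite_subsets
proof (intro allI impI ballI)
  fix S u v assume S: "S \<subseteq> X ` A" "finite S" and sum0: "(\<Sum>v\<in>S. mscale (u v) v) = (0 :: 'a mpoly)" and v: "v \<in> S"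
  obtain m where m: "v = X m" using S v by auto
  have "0 = Poly_Mapping.lookup (\<Sum>v\<in>S. mscale (u v) v) m" using sum0 by simp
  also have "\<dots> = (\<Sum>w\<in>S. u w * Poly_Mapping.lookup w m)"
    by (simp add: lookup_sum mscale_def Poly_Mapping.map.rep_eq when_def) (metis mult_zero_right)
  also have "\<dots> = (\<Sum>w\<in>{v}. u w * Poly_Mapping.lookup w m)"
  proof (rule sum.mono_neutral_right)
    show "\<forall>w\<in>S - {v}. u w * Poly_Mapping.lookup w m = 0"
    proof
      fix w assume w: "w \<in> S - {v}"
      then obtain m' where "w = X m'" using S by auto
      with w m have "m' \<noteq> m" by auto
      then show "u w * Poly_Mapping.lookup w m = 0" using \<open>w = X m'\<close> by (simp add: lookup_single)
    qed
  qed (use S v in auto)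
  also have "\<dots> = u v" using m by simp
  finally show "u v = 0" by simp
qed

lemma inj_X: "inj_on (X :: _ \<Rightarrow> 'a::comm_ring_1 mpoly) A"
  by (rule inj_onI) (metis lookup_single_eq lookup_single_not_eq zero_neq_one)

lemma dim_span_X: "V.dim (V.span (X ` A :: 'a::field mpoly set)) = card A"
proof -
  have "V.dim (V.span (X ` A :: 'a mpoly set)) = card (X ` A :: 'a mpoly set)"
    by (rule V.dim_span_eq_card_independent[OF independent_X])
  also have "\<dots> = card A" by (rule card_image[OF inj_X])
  finally show ?thesis .
qed

lemma dim_X: "V.dim (X ` A :: 'a::field mpoly set) = card A"
proof -
  have "V.dim (X ` A :: 'a mpoly set) = V.dim (V.span (X ` A :: 'a mpoly set))" by simp
  also have "\<dots> = card A" by (rule dim_span_X)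
  finally show ?thesis .
qed

lemma subspace_gpart: "V.subspace (gpart n j :: 'a::field mpoly set)"
  by (auto simp: V.subspace_def gpart_add gpart_mscale)

lemma gpart_eq_span: "(gpart N j :: 'a::field mpoly set) = V.span (X ` MS N j)"
proof
  show "gpart N j \<subseteq> V.span (X ` MS N j)"
    by (auto intro!: in_span_keys simp: gpart_def MS_def in_vars_def homog_def)
  show "V.span (X ` MS N j) \<subseteq> gpart N j"
    by (intro V.span_minimal subspace_gpart) (auto simp: MS_def intro: gpart_single)
qed

lemma dim_gpart: "V.dim (gpart N j :: 'a::field mpoly set) = card (MS N j)"
  by (simp add: gpart_eq_span dim_X)

lemma gpart_fin: "(gpart N j :: 'a::field mpoly set) \<subseteq> V.span (X ` MS N j)" "finite (X ` MS N j)"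
  by (simp_all add: gpart_eq_span finite_MS)

lemma ideal_genI: "a = (\<Sum>i<m. g i * F i) \<Longrightarrow> \<forall>i<m. in_vars n (g i) \<Longrightarrow> a \<in> ideal_gen n F m"
  unfolding ideal_gen_def by blast

lemma ideal_gen_add: "a \<in> ideal_gen n F m \<Longrightarrow> b \<in> ideal_gen n F m \<Longrightarrow> a + b \<in> ideal_gen n F m"
proof -
  assume "a \<in> ideal_gen n F m" "b \<in> ideal_gen n F m"
  then obtain g h where g: "a = (\<Sum>i<m. g i * F i)" "\<forall>i<m. in_vars n (g i)"
    and h: "b = (\<Sum>i<m. h i * F i)" "\<forall>i<m. in_vars n (h i)"
    unfolding ideal_gen_def by blast
  have "a + b = (\<Sum>i<m. (g i + h i) * F i)" using g h by (simp add: sum.distrib distrib_right)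
  moreover have "\<forall>i<m. in_vars n (g i + h i)" using g h by (simp add: in_vars_add)
  ultimately show ?thesis by (rule ideal_genI)
qed

lemma ideal_gen_0: "0 \<in> ideal_gen n F m"
proof -
  have "(0::'a::field mpoly) = (\<Sum>i<m. 0 * F i)" by simp
  then show ?thesis by (rule ideal_genI) simp
qed

lemma ideal_gen_mult: "a \<in> ideal_gen n F m \<Longrightarrow> in_vars n h \<Longrightarrow> h * a \<in> ideal_gen n F m"
proof -
  assume "a \<in> ideal_gen n F m" "in_vars n h"
  then obtain g where g: "a = (\<Sum>i<m. g i * F i)" "\<forall>i<m. in_vars n (g i)"
    unfolding ideal_gen_def by blast
  have "h * a = (\<Sum>i<m. (h * g i) * F i)" using g by (simp add: sum_distrib_left mult.assoc)
  moreover have "\<forall>i<m. in_vars n (h * g i)" using g \<open>in_vars n h\<close> by (simp add: in_vars_mult)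
  ultimately show ?thesis by (rule ideal_genI)
qed

lemma ideal_gen_mscale: "a \<in> ideal_gen n F m \<Longrightarrow> mscale c a \<in> ideal_gen n F m"
  by (simp add: mscale_conv ideal_gen_mult in_vars_const)

lemma ideal_gen_uminus: "a \<in> ideal_gen n F m \<Longrightarrow> - a \<in> ideal_gen n F m"
proof -
  have "C (-1) * a = - (a :: 'a::field mpoly)" by (simp add: single_uminus)
  then show "a \<in> ideal_gen n F m \<Longrightarrow> - a \<in> ideal_gen n F m"
    using ideal_gen_mscale[of a n F m "-1"] by (simp add: mscale_conv)
qed

lemma ideal_gen_diff: "a \<in> ideal_gen n F m \<Longrightarrow> b \<in> ideal_gen n F m \<Longrightarrow> a - b \<in> ideal_gen n F m"
  using ideal_gen_add[OF _ ideal_gen_uminus] by fastforce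

lemma ideal_gen_sum: "(\<And>i. i \<in> A \<Longrightarrow> f i \<in> ideal_gen n F m) \<Longrightarrow> sum f A \<in> ideal_gen n F m"
  by (induction A rule: infinite_finite_induct) (auto simp: ideal_gen_0 ideal_gen_add)

lemma ideal_gen_gen: "i < m \<Longrightarrow> in_vars n g \<Longrightarrow> g * F i \<in> ideal_gen n F m"
proof -
  assume a: "i < m" "in_vars n g"
  have "g * F i = (\<Sum>k<m. (if k = i then g else 0) * F k)"
    using a by (simp add: if_distrib[of "\<lambda>x. x * _"] cong: if_cong)
  moreover have "\<forall>k<m. in_vars n (if k = i then g else 0)" using a by simp
  ultimately show ?thesis by (rule ideal_genI)
qed

lemma subspace_ideal_gen: "V.subspace (ideal_gen n F m)"
  by (auto simp: V.subspace_def ideal_gen_0 ideal_gen_add ideal_gen_mscale)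

lemma mvar_power: "(mvar i ^ e :: 'a::comm_ring_1 mpoly) = X (Poly_Mapping.single i e)"
  unfolding mvar_def by (rule single_var_power)

lemma hc_ideal_gen:
  assumes "\<And>i. i < m \<Longrightarrow> homog (e i) (F i)" "u \<in> ideal_gen n F m"
  shows "hc j u \<in> ideal_gen n F (m::nat)"
proof -
  obtain g where g: "u = (\<Sum>i<m. g i * F i)" "\<forall>i<m. in_vars n (g i)"
    using assms(2) unfolding ideal_gen_def by blast
  have "hc j u = (\<Sum>i<m. hc j (g i * F i))" using g by (simp add: hc_sum)
  also have "\<dots> \<in> ideal_gen n F m"
  proof (rule ideal_gen_sum)
    fix i assume i: "i \<in> {..<m}"
    show "hc j (g i * F i) \<in> ideal_gen n F m"
      using i assms(1)[of i] g(2) by (auto simp: hc_mult_homog ideal_gen_0 intro!: ideal_gen_gen in_vars_hc)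
  qed
  finally show ?thesis .
qed

definition BadM :: "nat \<Rightarrow> (nat \<Rightarrow> nat) \<Rightarrow> nat \<Rightarrow> (nat \<Rightarrow>\<^sub>0 nat) set" where
  "BadM N d j = {m \<in> MS N j. \<exists>i<N. d i \<le> Poly_Mapping.lookup m i}"

definition GoodM :: "nat \<Rightarrow> (nat \<Rightarrow> nat) \<Rightarrow> nat \<Rightarrow> (nat \<Rightarrow>\<^sub>0 nat) set" where
  "GoodM N d j = {m. Poly_Mapping.keys m \<subseteq> {..<N} \<and> mdeg m = j \<and> (\<forall>i<N. Poly_Mapping.lookup m i < d i)}"

lemma GoodM_eq: "GoodM N d j = MS N j - BadM N d j"
  by (auto simp: GoodM_def BadM_def MS_def not_le)

lemma keys_MCI:
  assumes "p \<in> ideal_gen N (\<lambda>i. (mvar i :: 'a::field mpoly) ^ d i) N"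
  shows "Poly_Mapping.keys p \<subseteq> {m. \<exists>i<N. d i \<le> Poly_Mapping.lookup m i}"
proof -
  obtain g where g: "p = (\<Sum>i<N. g i * mvar i ^ d i)"
    using assms unfolding ideal_gen_def by blast
  have "p \<in> keysin {m. \<exists>i<N. d i \<le> Poly_Mapping.lookup m i}"
    unfolding g
  proof (rule keysin_sum)
    fix i assume i: "i \<in> {..<N}"
    show "g i * mvar i ^ d i \<in> keysin {m. \<exists>i<N. d i \<le> Poly_Mapping.lookup m i}"
      unfolding mvar_power
    proof (rule keysin_mult)
      show "g i \<in> keysin UNIV" by (simp add: keysin_def)
      show "X (Poly_Mapping.single i (d i)) \<in> keysin {Poly_Mapping.single i (d i)}"
        by (simp add: keysin_def)
      fix a b assume "b \<in> {Poly_Mapping.single i (d i)}"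
      then show "a + b \<in> {m. \<exists>i<N. d i \<le> Poly_Mapping.lookup m i}"
        using i by (auto simp: lookup_add)
    qed
  qed
  then show ?thesis by (simp add: keysin_def)
qed

lemma X_in_MCI:
  assumes "Poly_Mapping.keys m \<subseteq> {..<N}" "i < N" "d i \<le> Poly_Mapping.lookup m i"
  shows "(X m :: 'a::field mpoly) \<in> ideal_gen N (\<lambda>i. mvar i ^ d i) N"
proof -
  have e: "m = (m - Poly_Mapping.single i (d i)) + Poly_Mapping.single i (d i)"
    using assms(3) by (intro poly_mapping_eqI) (auto simp: lookup_add lookup_minus lookup_single when_def)
  have "(X m :: 'a mpoly) = X (m - Poly_Mapping.single i (d i)) * mvar i ^ d i"
    by (subst e) (simp add: mvar_power X_mult)
  moreover have "in_vars N (X (m - Poly_Mapping.single i (d i)) :: 'a mpoly)"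
  proof -
    have "Poly_Mapping.keys (m - Poly_Mapping.single i (d i)) \<subseteq> Poly_Mapping.keys m"
      by (auto simp: in_keys_iff lookup_minus)
    then show ?thesis using assms(1) by (auto simp: in_vars_def)
  qed
  ultimately show ?thesis using assms(2)
    by (metis (no_types, lifting) ideal_gen_gen)
qed

lemma MCI_part:
  "ideal_gen N (\<lambda>i. (mvar i :: 'a::field mpoly) ^ d i) N \<inter> gpart N j = V.span (X ` BadM N d j)"
proof
  show "ideal_gen N (\<lambda>i. (mvar i :: 'a mpoly) ^ d i) N \<inter> gpart N j \<subseteq> V.span (X ` BadM N d j)"
  proof
    fix p assume p: "p \<in> ideal_gen N (\<lambda>i. (mvar i :: 'a mpoly) ^ d i) N \<inter> gpart N j"
    have "Poly_Mapping.keys p \<subseteq> BadM N d j"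
      using keys_MCI[of p N d] p by (auto simp: BadM_def MS_def gpart_def in_vars_def homog_def)
    then show "p \<in> V.span (X ` BadM N d j)" by (rule in_span_keys)
  qed
  show "V.span (X ` BadM N d j) \<subseteq> ideal_gen N (\<lambda>i. (mvar i :: 'a mpoly) ^ d i) N \<inter> gpart N j"
  proof (rule V.span_minimal)
    show "V.subspace (ideal_gen N (\<lambda>i. (mvar i :: 'a mpoly) ^ d i) N \<inter> gpart N j)"
      by (intro V.subspace_inter subspace_ideal_gen subspace_gpart)
    show "X ` BadM N d j \<subseteq> ideal_gen N (\<lambda>i. (mvar i :: 'a mpoly) ^ d i) N \<inter> gpart N j"
    proof
      fix x :: "'a mpoly" assume "x \<in> X ` BadM N d j"
      then obtain m where m: "m \<in> BadM N d j" "x = X m" by auto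
      then obtain i where "i < N" "d i \<le> Poly_Mapping.lookup m i" by (auto simp: BadM_def)
      then show "x \<in> ideal_gen N (\<lambda>i. (mvar i :: 'a mpoly) ^ d i) N \<inter> gpart N j"
        using m X_in_MCI[of m N i d] gpart_single[of m N 1]
        by (auto simp: BadM_def MS_def)
    qed
  qed
qed

lemma hilb_MCI:
  "V.dim (gpart N j :: 'a::field mpoly set) - V.dim (ideal_gen N (\<lambda>i. (mvar i :: 'a mpoly) ^ d i) N \<inter> gpart N j)
   = card (GoodM N d j)"
proof -
  have "BadM N d j \<subseteq> MS N j" by (auto simp: BadM_def)
  then show ?thesis
    by (simp add: MCI_part dim_gpart dim_X GoodM_eq card_Diff_subset finite_subset[OF _ finite_MS])
qed

lemma GoodM_0: "GoodM 0 d j = (if j = 0 then {0} else {})"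
proof -
  have "Poly_Mapping.keys m \<subseteq> {..<0} \<longleftrightarrow> m = 0" for m :: "nat \<Rightarrow>\<^sub>0 nat"
    by auto
  then show ?thesis by (auto simp: GoodM_def)
qed

lemma GoodM_Suc:
  "GoodM (Suc N) d j = (\<Union>e\<in>{e. e \<le> j \<and> e < d N}. (\<lambda>m. m + Poly_Mapping.single N e) ` GoodM N d (j - e))"
proof (intro equalityI subsetI)
  fix m assume m: "m \<in> GoodM (Suc N) d j"
  define e where "e = Poly_Mapping.lookup m N"
  define m' where "m' = m - Poly_Mapping.single N e"
  have me: "m = m' + Poly_Mapping.single N e"
    unfolding m'_def e_def by (intro poly_mapping_eqI) (auto simp: lookup_add lookup_minus lookup_single when_def)
  have lk: "Poly_Mapping.lookup m' i = (if i = N then 0 else Poly_Mapping.lookup m i)" for i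
    unfolding m'_def e_def by (auto simp: lookup_minus lookup_single when_def)
  have "e \<le> j" using lookup_le_mdeg[of m N] m by (simp add: e_def GoodM_def)
  moreover have "e < d N" using m by (simp add: e_def GoodM_def)
  moreover have "m' \<in> GoodM N d (j - e)"
  proof -
    have "Poly_Mapping.keys m' \<subseteq> {..<N}"
    proof
      fix i assume "i \<in> Poly_Mapping.keys m'"
      then have "i \<noteq> N" "i \<in> Poly_Mapping.keys m" by (auto simp: in_keys_iff lk split: if_splits)
      then show "i \<in> {..<N}" using m by (auto simp: GoodM_def)
    qed
    moreover have "mdeg m' = j - e"
    proof -
      have "mdeg m = mdeg m' + e" using me mdeg_add[of m' "Poly_Mapping.single N e"] by simp
      then show ?thesis using m by (simp add: GoodM_def; linarith)
    qed
    moreover have "\<forall>i<N. Poly_Mapping.lookup m' i < d i" using m by (auto simp: lk GoodM_def)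
    ultimately show ?thesis by (simp add: GoodM_def)
  qed
  ultimately show "m \<in> (\<Union>e\<in>{e. e \<le> j \<and> e < d N}. (\<lambda>m. m + Poly_Mapping.single N e) ` GoodM N d (j - e))"
    using me by blast
next
  fix m assume "m \<in> (\<Union>e\<in>{e. e \<le> j \<and> e < d N}. (\<lambda>m. m + Poly_Mapping.single N e) ` GoodM N d (j - e))"
  then obtain e m' where e: "e \<le> j" "e < d N" and m': "m' \<in> GoodM N d (j - e)" and me: "m = m' + Poly_Mapping.single N e"
    by blast
  have N0: "Poly_Mapping.lookup m' N = 0" using m' by (auto simp: GoodM_def in_keys_iff)
  have "Poly_Mapping.keys m \<subseteq> {..<Suc N}"
    using m' unfolding me by (auto simp: GoodM_def keys_add_nat)
  moreover have "mdeg m = j" using m' e unfolding me by (simp add: mdeg_add GoodM_def)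
  moreover have "\<forall>i<Suc N. Poly_Mapping.lookup m i < d i"
    using m' e N0 unfolding me by (auto simp: GoodM_def lookup_add lookup_single less_Suc_eq)
  ultimately show "m \<in> GoodM (Suc N) d j" by (simp add: GoodM_def)
qed

lemma finite_GoodM: "finite (GoodM N d j)"
  using finite_MS[of N j] by (rule finite_subset[rotated]) (auto simp: GoodM_def MS_def)

lemma card_GoodM_Suc:
  "card (GoodM (Suc N) d j) = (\<Sum>e\<in>{e. e \<le> j \<and> e < d N}. card (GoodM N d (j - e)))"
proof -
  have disj: "(\<lambda>m. m + Poly_Mapping.single N e) ` GoodM N d (j - e) \<inter> (\<lambda>m. m + Poly_Mapping.single N e') ` GoodM N d (j - e') = {}"
    if "e \<noteq> e'" for e e' :: nat
  proof (rule ccontr)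
    assume "\<not> ?thesis"
    then obtain a b where ab: "a \<in> GoodM N d (j - e)" "b \<in> GoodM N d (j - e')"
      "a + Poly_Mapping.single N e = b + Poly_Mapping.single N e'" by blast
    have "Poly_Mapping.lookup a N = 0" "Poly_Mapping.lookup b N = 0"
      using ab(1,2) by (auto simp: GoodM_def in_keys_iff)
    then have "e = e'" using arg_cong[OF ab(3), of "\<lambda>m. Poly_Mapping.lookup m N"] by (simp add: lookup_add)
    with that show False by simp
  qed
  have "card (GoodM (Suc N) d j) = (\<Sum>e\<in>{e. e \<le> j \<and> e < d N}. card ((\<lambda>m. m + Poly_Mapping.single N e) ` GoodM N d (j - e)))"
    unfolding GoodM_Suc by (rule card_UN_disjoint) (simp_all add: finite_GoodM disj)
  also have "\<dots> = (\<Sum>e\<in>{e. e \<le> j \<and> e < d N}. card (GoodM N d (j - e)))"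
    by (intro sum.cong refl card_image inj_onI) (simp add: poly_mapping_eq_iff fun_eq_iff lookup_add)
  finally show ?thesis .
qed

lemma GoodM_fps: "Abs_fps (\<lambda>j. int (card (GoodM N d j))) = (\<Prod>i<N. (\<Sum>e<d i. fps_X ^ e :: int fps))"
proof (induction N)
  case 0
  show ?case by (simp add: fps_eq_iff GoodM_0)
next
  case (Suc N)
  let ?A = "Abs_fps (\<lambda>j. int (card (GoodM N d j)))"
  have "(\<Prod>i<Suc N. (\<Sum>e<d i. fps_X ^ e :: int fps)) = ?A * (\<Sum>e<d N. fps_X ^ e)"
    using Suc by simp
  also have "\<dots> = Abs_fps (\<lambda>j. int (card (GoodM (Suc N) d j)))"
  proof (rule fps_ext)
    fix j
    have "fps_nth (?A * (\<Sum>e<d N. fps_X ^ e)) j = (\<Sum>i=0..j. int (card (GoodM N d i)) * (if j - i < d N then 1 else 0))"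
      by (simp add: fps_mult_nth fps_sum_nth)
    also have "\<dots> = (\<Sum>e=0..j. int (card (GoodM N d (j - e))) * (if e < d N then 1 else 0))"
      by (rule sum.reindex_bij_witness[of _ "\<lambda>e. j - e" "\<lambda>i. j - i"]) auto
    also have "\<dots> = (\<Sum>e=0..j. if e < d N then int (card (GoodM N d (j - e))) else 0)"
      by (intro sum.cong) auto
    also have "\<dots> = (\<Sum>e\<in>{e \<in> {0..j}. e < d N}. int (card (GoodM N d (j - e))))"
      by (rule sum.inter_filter[symmetric]) simp
    also have "{e \<in> {0..j}. e < d N} = {e. e \<le> j \<and> e < d N}" by auto
    also have "(\<Sum>e\<in>{e. e \<le> j \<and> e < d N}. int (card (GoodM N d (j - e)))) = int (card (GoodM (Suc N) d j))"
      by (simp add: card_GoodM_Suc)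
    finally show "fps_nth (?A * (\<Sum>e<d N. fps_X ^ e)) j = fps_nth (Abs_fps (\<lambda>j. int (card (GoodM (Suc N) d j)))) j"
      by simp
  qed
  finally show ?case by simp
qed

lemma geom_sum_mult: "(\<Sum>e<d. fps_X ^ e :: int fps) * (1 - fps_X) = 1 - fps_X ^ d"
proof (induction d)
  case (Suc d)
  have "(\<Sum>e<Suc d. fps_X ^ e :: int fps) * (1 - fps_X) = (\<Sum>e<d. fps_X ^ e) * (1 - fps_X) + fps_X ^ d * (1 - fps_X)"
    by (simp add: distrib_right)
  also have "\<dots> = 1 - fps_X ^ Suc d" unfolding Suc by (simp add: algebra_simps)
  finally show ?case .
qed simp

lemma geom_sum: "(\<Sum>e<d. fps_X ^ e :: int fps) = (1 - fps_X ^ d) * geom_fps"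
proof -
  have "(\<Sum>e<d. fps_X ^ e :: int fps) = (\<Sum>e<d. fps_X ^ e :: int fps) * ((1 - fps_X) * geom_fps)"
    using geom_fps_inverse by (simp add: mult.commute)
  also have "\<dots> = (1 - fps_X ^ d) * geom_fps"
    by (simp add: geom_sum_mult mult.assoc[symmetric])
  finally show ?thesis .
qed

lemma card_GoodM_coeff:
  "int (card (GoodM N d j)) = fps_nth ((\<Prod>i<N. 1 - fps_X ^ d i) * geom_fps ^ N) j"
proof -
  have "(\<Prod>i<N. (\<Sum>e<d i. fps_X ^ e :: int fps)) = (\<Prod>i<N. 1 - fps_X ^ d i) * geom_fps ^ N"
    by (simp add: geom_sum prod.distrib)
  then show ?thesis using GoodM_fps[of N d] by (metis fps_nth_Abs_fps)
qed

definition congl :: "nat \<Rightarrow> 'a::field mpoly \<Rightarrow> 'a mpoly \<Rightarrow> 'a mpoly \<Rightarrow> bool" where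
  "congl N l a b \<longleftrightarrow> (\<exists>q. in_vars N q \<and> a - b = l * q)"

lemma congl_refl: "congl N l a a"
  unfolding congl_def by (rule exI[of _ 0]) simp

lemma congl_add: "congl N l a b \<Longrightarrow> congl N l a' b' \<Longrightarrow> congl N l (a + a') (b + b')"
  unfolding congl_def
proof (elim exE conjE)
  fix q q' assume "in_vars N q" "a - b = l * q" "in_vars N q'" "a' - b' = l * q'"
  then show "\<exists>q. in_vars N q \<and> a + a' - (b + b') = l * q"
    by (intro exI[of _ "q + q'"]) (auto simp: in_vars_add algebra_simps)
qed

lemma congl_mult:
  assumes "congl N l a b" "congl N l a' b'" "in_vars N a" "in_vars N b'"
  shows "congl N l (a * a') (b * b')"
proof -
  obtain q q' where qq: "in_vars N q" "a - b = l * q" "in_vars N q'" "a' - b' = l * q'"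
    using assms(1,2) unfolding congl_def by blast
  have "a * a' - b * b' = a * (a' - b') + (a - b) * b'" by (simp add: algebra_simps)
  also have "\<dots> = l * (a * q' + q * b')" using qq by (simp add: algebra_simps)
  finally have "a * a' - b * b' = l * (a * q' + q * b')" .
  moreover have "in_vars N (a * q' + q * b')"
    using assms(3,4) qq by (simp add: in_vars_add in_vars_mult)
  ultimately show ?thesis unfolding congl_def by blast
qed

lemma congl_power:
  assumes "congl N l a b" "in_vars N a" "in_vars N b"
  shows "congl N l (a ^ k) (b ^ k)"
proof (induction k)
  case 0 show ?case by (simp add: congl_refl)
next
  case (Suc k)
  then show ?case using congl_mult[OF assms(1) Suc assms(2) in_vars_power[OF assms(3)]] by simp
qed

lemma congl_prod:
  assumes "\<And>i. i \<in> A \<Longrightarrow> congl N l (f i) (g i)" "\<And>i. i \<in> A \<Longrightarrow> in_vars N (f i)" "\<And>i. i \<in> A \<Longrightarrow> in_vars N (g i)"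
  shows "congl N l (prod f A) (prod g A)"
  using assms
proof (induction A rule: infinite_finite_induct)
  case (insert x F)
  then show ?case by (simp add: congl_mult in_vars_prod)
qed (simp_all add: congl_refl)

lemma congl_sum:
  assumes "\<And>i. i \<in> A \<Longrightarrow> congl N l (f i) (g i)"
  shows "congl N l (sum f A) (sum g A)"
  using assms
proof (induction A rule: infinite_finite_induct)
  case (insert x F)
  then show ?case by (simp add: congl_add)
qed (simp_all add: congl_refl)

lemma congl_subst:
  assumes "in_vars N p" "\<And>i. i < N \<Longrightarrow> in_vars N (\<tau> i)"
    and "\<And>i. i < N \<Longrightarrow> congl N l (mvar i) (\<tau> i)"
  shows "congl N l p (subst \<tau> p)"
proof -
  have "p = subst mvar p" by (simp add: subst_id)
  also have "congl N l (subst mvar p) (subst \<tau> p)"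
    unfolding subst_def
  proof (rule congl_sum)
    fix m assume m: "m \<in> Poly_Mapping.keys p"
    then have km: "Poly_Mapping.keys m \<subseteq> {..<N}" using assms(1) by (auto simp: in_vars_def)
    have "congl N l (mmono mvar m) (mmono \<tau> m)"
      unfolding mmono_def
    proof (rule congl_prod)
      fix i assume "i \<in> Poly_Mapping.keys m"
      then have i: "i < N" using km by auto
      show "congl N l (mvar i ^ Poly_Mapping.lookup m i) (\<tau> i ^ Poly_Mapping.lookup m i)"
        using congl_power[OF assms(3)[OF i] gpart_in_vars[OF mvar_gpart[OF i]] assms(2)[OF i]] .
      show "in_vars N ((mvar i :: 'a mpoly) ^ Poly_Mapping.lookup m i)"
        using in_vars_power[OF gpart_in_vars[OF mvar_gpart[OF i]]] .
      show "in_vars N (\<tau> i ^ Poly_Mapping.lookup m i)"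
        using i assms(2) by (intro in_vars_power)
    qed
    then show "congl N l (C (Poly_Mapping.lookup p m) * mmono mvar m) (C (Poly_Mapping.lookup p m) * mmono \<tau> m)"
    proof (rule congl_mult[OF congl_refl _ in_vars_const])
      show "in_vars N (mmono \<tau> m)" unfolding mmono_def
        by (rule in_vars_prod, rule in_vars_power, rule assms(2)) (use km in auto)
    qed
  qed
  finally show ?thesis .
qed

definition lincomb :: "nat \<Rightarrow> nat \<Rightarrow> 'a::field mpoly set" where
  "lincomb N i = {(\<Sum>k<N. mvar k * q k) | q. \<forall>k<N. q k \<in> gpart N i}"

lemma lincombI: "a = (\<Sum>k<N. mvar k * q k) \<Longrightarrow> \<forall>k<N. q k \<in> gpart N i \<Longrightarrow> a \<in> lincomb N i"
  unfolding lincomb_def by blast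

lemma lincomb_add: "a \<in> lincomb N i \<Longrightarrow> b \<in> lincomb N i \<Longrightarrow> a + b \<in> lincomb N i"
proof -
  assume "a \<in> lincomb N i" "b \<in> lincomb N i"
  then obtain q r where q: "a = (\<Sum>k<N. mvar k * q k)" "\<forall>k<N. q k \<in> gpart N i"
    and r: "b = (\<Sum>k<N. mvar k * r k)" "\<forall>k<N. r k \<in> gpart N i"
    unfolding lincomb_def by blast
  have "a + b = (\<Sum>k<N. mvar k * (q k + r k))" using q r by (simp add: sum.distrib distrib_left)
  moreover have "\<forall>k<N. q k + r k \<in> gpart N i" using q r by (simp add: gpart_add)
  ultimately show ?thesis by (rule lincombI)
qed

lemma lincomb_0: "0 \<in> lincomb N i"
proof -
  have "(0::'a::field mpoly) = (\<Sum>k<N. mvar k * 0)" by simp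
  moreover have "\<forall>k<N. (0::'a mpoly) \<in> gpart N i" by simp
  ultimately show ?thesis by (rule lincombI)
qed

lemma lincomb_sum: "(\<And>x. x \<in> A \<Longrightarrow> f x \<in> lincomb N i) \<Longrightarrow> sum f A \<in> lincomb N i"
  by (induction A rule: infinite_finite_induct) (auto simp: lincomb_0 lincomb_add)

lemma lincomb_single:
  assumes "Poly_Mapping.keys m \<subseteq> {..<N}" "mdeg m = Suc i"
  shows "(Poly_Mapping.single m c :: 'a::field mpoly) \<in> lincomb N i"
proof -
  have "Poly_Mapping.keys m \<noteq> {}" using assms(2) by (auto simp: mdeg_def)
  then obtain k where k: "k \<in> Poly_Mapping.keys m" by blast
  then have kN: "k < N" using assms(1) by auto
  define m' where "m' = m - Poly_Mapping.single k 1"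
  have lk: "Poly_Mapping.lookup m k \<ge> 1" using k by (simp add: in_keys_iff)
  have me: "m = Poly_Mapping.single k 1 + m'"
    unfolding m'_def using lk by (intro poly_mapping_eqI) (auto simp: lookup_add lookup_minus lookup_single when_def)
  have "mdeg m' = i" using assms(2) mdeg_add[of "Poly_Mapping.single k 1" m'] me by simp
  moreover have "Poly_Mapping.keys m' \<subseteq> {..<N}"
  proof -
    have "Poly_Mapping.keys m' \<subseteq> Poly_Mapping.keys m" unfolding m'_def by (auto simp: in_keys_iff lookup_minus)
    then show ?thesis using assms(1) by blast
  qed
  ultimately have g: "Poly_Mapping.single m' c \<in> gpart N i" using gpart_single[of m' N c] by simp
  have "Poly_Mapping.single m c = (\<Sum>k'<N. mvar k' * (if k' = k then Poly_Mapping.single m' c else 0))"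
    using kN by (simp add: if_distrib[of "\<lambda>x. _ * x"] mvar_def mult_single me cong: if_cong)
  moreover have "\<forall>k'<N. (if k' = k then Poly_Mapping.single m' c else 0) \<in> gpart N i" using g by simp
  ultimately show ?thesis by (rule lincombI)
qed

lemma decomp:
  assumes "g \<in> gpart N (Suc i)"
  shows "\<exists>q. (\<forall>k<N. q k \<in> gpart N i) \<and> g = (\<Sum>k<N. mvar k * q k :: 'a::field mpoly)"
proof -
  have "g = (\<Sum>m\<in>Poly_Mapping.keys g. Poly_Mapping.single m (Poly_Mapping.lookup g m))"
    using pm_expand[of "Poly_Mapping.keys g" g] by simp
  also have "\<dots> \<in> lincomb N i"
  proof -
    have "\<forall>m\<in>Poly_Mapping.keys g. Poly_Mapping.single m (Poly_Mapping.lookup g m) \<in> lincomb N i"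
      using assms by (auto simp: gpart_def in_vars_def homog_def intro!: lincomb_single)
    then show ?thesis by (intro lincomb_sum) auto
  qed
  finally show ?thesis unfolding lincomb_def by blast
qed

lemma mdeg1:
  assumes "mdeg m = 1"
  shows "\<exists>i. m = Poly_Mapping.single i 1"
proof -
  have "Poly_Mapping.keys m \<noteq> {}" using assms by (auto simp: mdeg_def)
  then obtain i where i: "i \<in> Poly_Mapping.keys m" by blast
  have "mdeg m = Poly_Mapping.lookup m i + (\<Sum>k\<in>Poly_Mapping.keys m - {i}. Poly_Mapping.lookup m k)"
    unfolding mdeg_def using i by (simp add: sum.remove)
  moreover have "Poly_Mapping.lookup m i \<ge> 1" using i by (simp add: in_keys_iff)
  ultimately have li: "Poly_Mapping.lookup m i = 1" and rest: "(\<Sum>k\<in>Poly_Mapping.keys m - {i}. Poly_Mapping.lookup m k) = 0"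
    using assms by linarith+
  have "\<forall>k\<in>Poly_Mapping.keys m - {i}. Poly_Mapping.lookup m k = 0"
    using rest by simp
  then have "k \<noteq> i \<Longrightarrow> Poly_Mapping.lookup m k = 0" for k by (auto simp: in_keys_iff)
  then have "m = Poly_Mapping.single i 1"
    using li by (intro poly_mapping_eqI) (auto simp: lookup_single when_def)
  then show ?thesis by blast
qed

lemma linform:
  assumes "l \<in> gpart N 1"
  shows "l = (\<Sum>i<N. C (Poly_Mapping.lookup l (Poly_Mapping.single i 1)) * (mvar i :: 'a::field mpoly))"
proof -
  have inj: "inj_on (\<lambda>i. Poly_Mapping.single i (1::nat)) {..<N}"
    by (rule inj_onI) (metis lookup_single_eq lookup_single_not_eq zero_neq_one)
  have keys: "Poly_Mapping.keys l \<subseteq> (\<lambda>i. Poly_Mapping.single i 1) ` {..<N}"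
  proof
    fix m assume m: "m \<in> Poly_Mapping.keys l"
    then have "mdeg m = 1" "Poly_Mapping.keys m \<subseteq> {..<N}" using assms by (auto simp: gpart_def homog_def in_vars_def)
    moreover obtain i where i: "m = Poly_Mapping.single i 1" using mdeg1[OF \<open>mdeg m = 1\<close>] by blast
    ultimately have "i < N" by simp
    with i show "m \<in> (\<lambda>i. Poly_Mapping.single i 1) ` {..<N}" by auto
  qed
  have "l = (\<Sum>m\<in>(\<lambda>i. Poly_Mapping.single i 1) ` {..<N}. Poly_Mapping.single m (Poly_Mapping.lookup l m))"
    by (rule pm_expand) (use keys in auto)
  also have "\<dots> = (\<Sum>i<N. Poly_Mapping.single (Poly_Mapping.single i 1) (Poly_Mapping.lookup l (Poly_Mapping.single i 1)))"
    by (rule sum.reindex[OF inj, unfolded comp_def])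
  also have "\<dots> = (\<Sum>i<N. C (Poly_Mapping.lookup l (Poly_Mapping.single i 1)) * mvar i)"
    by (simp add: mvar_def mult_single)
  finally show ?thesis .
qed

definition "rho j i = (mvar (if i < j then i else i - 1) :: 'a::field mpoly)"
definition "Lf a j N = - (\<Sum>i\<in>{..<N} - {j}. C (a i / a j) * (rho j i :: 'a::field mpoly))"
definition "sig a j N i = (if i = j then Lf a j N else rho j i :: 'a::field mpoly)"
definition "tau j i = (mvar (if i < j then i else Suc i) :: 'a::field mpoly)"

lemma psi_rho: "i \<noteq> j \<Longrightarrow> subst (tau j) (rho j i) = mvar i"
  by (auto simp: rho_def tau_def)

lemma phi_tau: "subst (sig a j N) (tau j i) = mvar i"
  by (auto simp: sig_def tau_def rho_def)

lemma sig_gpart: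
  assumes "j < Suc n" "i < Suc n"
  shows "sig a j (Suc n) i \<in> gpart n 1"
proof -
  have rho: "k < Suc n \<Longrightarrow> k \<noteq> j \<Longrightarrow> rho j k \<in> gpart n 1" for k
    unfolding rho_def using assms(1) by (intro mvar_gpart) auto
  have "Lf a j (Suc n) \<in> gpart n 1"
    unfolding Lf_def
    by (intro gpart_uminus gpart_sum) (use rho gpart_mult[OF gpart_const rho] in auto)
  then show ?thesis using rho assms by (auto simp: sig_def)
qed

lemma tau_gpart: "i < n \<Longrightarrow> tau j i \<in> gpart (Suc n) 1"
  unfolding tau_def by (intro mvar_gpart) auto

lemma phi_l:
  assumes "l \<in> gpart N 1" "j < N" "a j \<noteq> 0" "a = (\<lambda>i. Poly_Mapping.lookup l (Poly_Mapping.single i 1))"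
  shows "subst (sig a j N) l = (0 :: 'a::field mpoly)"
proof -
  have "subst (sig a j N) l = (\<Sum>i<N. C (a i) * sig a j N i)"
    by (subst linform[OF assms(1)]) (simp add: subst_sum subst_mult assms(4))
  also have "\<dots> = C (a j) * sig a j N j + (\<Sum>i\<in>{..<N} - {j}. C (a i) * sig a j N i)"
    using assms(2) by (simp add: sum.remove)
  also have "(\<Sum>i\<in>{..<N} - {j}. C (a i) * sig a j N i) = (\<Sum>i\<in>{..<N} - {j}. C (a i) * rho j i)"
    by (intro sum.cong) (auto simp: sig_def)
  also have "C (a j) * sig a j N j = - (\<Sum>i\<in>{..<N} - {j}. C (a i) * rho j i)"
    using assms(3) by (simp add: sig_def Lf_def sum_distrib_left mult.assoc[symmetric] C_mult[symmetric])
  finally show ?thesis by simp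
qed

lemma congl_sig:
  assumes "l \<in> gpart N 1" "j < N" "a j \<noteq> 0" "a = (\<lambda>i. Poly_Mapping.lookup l (Poly_Mapping.single i 1))" "i < N"
  shows "congl N l (mvar i) (subst (tau j) (sig a j N i) :: 'a::field mpoly)"
proof (cases "i = j")
  case False
  then show ?thesis by (simp add: sig_def psi_rho congl_refl)
next
  case True
  have "subst (tau j) (sig a j N i) = - (\<Sum>k\<in>{..<N} - {j}. C (a k / a j) * mvar k)"
    using True by (simp add: sig_def Lf_def subst_sum subst_mult subst_uminus) (intro sum.cong refl, simp add: psi_rho)
  moreover have "C (1 / a j) * l = (\<Sum>k<N. C (a k / a j) * mvar k)"
    by (subst linform[OF assms(1)]) (simp add: sum_distrib_left mult.assoc[symmetric] C_mult[symmetric] assms(4))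
  moreover have "(\<Sum>k<N. C (a k / a j) * mvar k) = C (a j / a j) * mvar j + (\<Sum>k\<in>{..<N} - {j}. C (a k / a j) * (mvar k :: 'a mpoly))"
    using assms(2) by (simp add: sum.remove)
  ultimately have "mvar i - subst (tau j) (sig a j N i) = l * C (1 / a j)"
    using True assms(3) by (simp add: mult.commute)
  then show ?thesis unfolding congl_def by (intro exI[of _ "C (1 / a j)"]) (simp add: in_vars_const)
qed

lemma dim_zero_set: "V.dim {0 :: 'a::field mpoly} = 0"
proof -
  have "V.span {} = V.span {0 :: 'a mpoly}" by simp
  then have "V.dim {0 :: 'a mpoly} = card ({} :: 'a mpoly set)"
    by (rule V.dim_eq_card) (simp_all add: V.independent_empty)
  then show ?thesis by simp
qed

lemma homog_mvar_power: "homog e (mvar i ^ e :: 'a::comm_ring_1 mpoly)"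
proof (rule homog_power)
  show "homog 1 (mvar i :: 'a mpoly)" using mvar_gpart[of i "Suc i", where 'a='a] by (simp add: gpart_def)
qed

locale mcisetup =
  fixes n :: nat and d :: "nat \<Rightarrow> nat" and l :: "'a::field mpoly" and \<sigma> \<tau> :: "nat \<Rightarrow> 'a mpoly"
  assumes l: "l \<in> gpart (Suc n) 1"
    and sig: "\<And>i. i < Suc n \<Longrightarrow> \<sigma> i \<in> gpart n 1"
    and tau: "\<And>i. i < n \<Longrightarrow> \<tau> i \<in> gpart (Suc n) 1"
    and phitau: "\<And>i. i < n \<Longrightarrow> subst \<sigma> (\<tau> i) = mvar i"
    and cong: "\<And>i. i < Suc n \<Longrightarrow> congl (Suc n) l (mvar i) (subst \<tau> (\<sigma> i))"
    and phil: "subst \<sigma> l = 0"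
begin

abbreviation "I \<equiv> ideal_gen (Suc n) (\<lambda>i. (mvar i :: 'a mpoly) ^ d i) (Suc n)"
abbreviation "J \<equiv> ideal_gen n (\<lambda>i. \<sigma> i ^ d i) (Suc n)"
abbreviation "S k \<equiv> (gpart (Suc n) k :: 'a mpoly set)"
abbreviation "R k \<equiv> (gpart n k :: 'a mpoly set)"
abbreviation "T \<equiv> subst \<sigma>"

lemma sig_iv: "i < Suc n \<Longrightarrow> in_vars n (\<sigma> i)" using sig by (simp add: gpart_def)
lemma sig_h: "i < Suc n \<Longrightarrow> homog 1 (\<sigma> i)" using sig by (simp add: gpart_def)
lemma tau_iv: "i < n \<Longrightarrow> in_vars (Suc n) (\<tau> i)" using tau by (simp add: gpart_def)

lemma phipsi: "in_vars n r \<Longrightarrow> T (subst \<tau> r) = r"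
proof -
  assume r: "in_vars n r"
  have "T (subst \<tau> r) = subst (\<lambda>i. T (\<tau> i)) r" by (rule subst_comp)
  also have "\<dots> = subst mvar r" by (rule subst_cong[OF r]) (simp add: phitau)
  finally show ?thesis by (simp add: subst_id)
qed

lemma kernel:
  assumes p: "p \<in> S k" "T p = 0"
  shows "(k = 0 \<longrightarrow> p = 0) \<and> (0 < k \<longrightarrow> (\<exists>q\<in>S (k - 1). p = l * q))"
proof -
  have iv: "in_vars (Suc n) p" using p by (simp add: gpart_def)
  have "congl (Suc n) l p (subst (\<lambda>i. subst \<tau> (\<sigma> i)) p)"
  proof (rule congl_subst[OF iv])
    fix i assume i: "i < Suc n"
    show "in_vars (Suc n) (subst \<tau> (\<sigma> i))"
      by (rule in_vars_subst[OF sig_iv[OF i]]) (rule tau_iv)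
    show "congl (Suc n) l (mvar i) (subst \<tau> (\<sigma> i))" using cong i .
  qed
  moreover have "subst (\<lambda>i. subst \<tau> (\<sigma> i)) p = 0"
    using subst_comp[of \<tau> \<sigma> p] p(2) by simp
  ultimately obtain q where q: "in_vars (Suc n) q" "p = l * q" unfolding congl_def by auto
  have hl: "homog 1 l" using l by (simp add: gpart_def)
  have "p = hc k p" using p by (simp add: hc_homog gpart_def)
  also have "\<dots> = (if 1 \<le> k then hc (k - 1) q * l else 0)"
    using q(2) hc_mult_homog[OF hl, of k q] by (simp add: mult.commute)
  finally have e: "p = (if 1 \<le> k then hc (k - 1) q * l else 0)" .
  show ?thesis
    using e gpart_hc[OF q(1), of "k - 1"] by (auto simp: mult.commute)
qed

lemma imS: "T ` S k = R k"
proof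
  show "T ` S k \<subseteq> R k" using gpart_subst sig by blast
  show "R k \<subseteq> T ` S k"
  proof
    fix r assume r: "r \<in> R k"
    have "subst \<tau> r \<in> S k" using gpart_subst[OF r] tau by blast
    moreover have "T (subst \<tau> r) = r" using r by (simp add: phipsi gpart_def)
    ultimately show "r \<in> T ` S k" by force
  qed
qed

lemma imI: "T ` (I \<inter> S k) = J \<inter> R k"
proof
  show "T ` (I \<inter> S k) \<subseteq> J \<inter> R k"
  proof
    fix x assume "x \<in> T ` (I \<inter> S k)"
    then obtain p where p: "p \<in> I" "p \<in> S k" "x = T p" by auto
    obtain g where g: "p = (\<Sum>i<Suc n. g i * mvar i ^ d i)" "\<forall>i<Suc n. in_vars (Suc n) (g i)"
      using p(1) unfolding ideal_gen_def by blast
    have "T p = (\<Sum>i<Suc n. T (g i) * \<sigma> i ^ d i)"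
      unfolding g(1) subst_sum subst_mult subst_power subst_mvar by (rule refl)
    moreover have "\<forall>i<Suc n. in_vars n (T (g i))"
      using g(2) sig_iv by (auto intro: in_vars_subst)
    ultimately have "T p \<in> J" by (rule ideal_genI)
    moreover have "T p \<in> R k" using gpart_subst[OF p(2)] sig by blast
    ultimately show "x \<in> J \<inter> R k" using p by simp
  qed
  show "J \<inter> R k \<subseteq> T ` (I \<inter> S k)"
  proof
    fix r assume r: "r \<in> J \<inter> R k"
    obtain g where g: "r = (\<Sum>i<Suc n. g i * \<sigma> i ^ d i)" "\<forall>i<Suc n. in_vars n (g i)"
      using r unfolding ideal_gen_def by blast
    define u where "u = (\<Sum>i<Suc n. subst \<tau> (g i) * mvar i ^ d i)"
    have ivg: "\<forall>i<Suc n. in_vars (Suc n) (subst \<tau> (g i))"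
      using g(2) tau_iv by (auto intro: in_vars_subst)
    have uI: "u \<in> I" unfolding u_def by (rule ideal_genI[OF refl ivg])
    have ivu: "in_vars (Suc n) u" unfolding u_def
    proof (rule in_vars_sum)
      fix i assume i: "i \<in> {..<Suc n}"
      have "in_vars (Suc n) ((mvar i :: 'a mpoly) ^ d i)"
        using i by (intro in_vars_power gpart_in_vars[OF mvar_gpart]) simp
      then show "in_vars (Suc n) (subst \<tau> (g i) * mvar i ^ d i)"
        using ivg i by (intro in_vars_mult) auto
    qed
    have Tu: "T u = r"
      unfolding u_def g(1) subst_sum subst_mult subst_power subst_mvar
      using g(2) by (intro sum.cong refl) (simp add: phipsi)
    have "hc k u \<in> I" by (rule hc_ideal_gen[OF _ uI]) (rule homog_mvar_power)
    moreover have "hc k u \<in> S k" by (rule gpart_hc[OF ivu])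
    moreover have "T (hc k u) = r"
    proof -
      have "T (hc k u) = hc k (T u)" by (rule subst_hc[OF ivu sig_h])
      also have "\<dots> = r" using Tu r by (simp add: hc_homog gpart_def)
      finally show ?thesis .
    qed
    ultimately show "r \<in> T ` (I \<inter> S k)" by force
  qed
qed

lemma S_fin: "S k \<subseteq> V.span (X ` MS (Suc n) k)" "finite (X ` MS (Suc n) k)"
  using gpart_fin by blast+

lemma subspace_IS: "V.subspace (I \<inter> S k)"
  by (intro V.subspace_inter subspace_ideal_gen subspace_gpart)

definition "Q k = {x \<in> S k. l * x \<in> I}"

lemma subspace_Q: "V.subspace (Q k)"
proof -
  have "l * mscale c x = mscale c (l * x)" for c x by (simp add: mscale_conv mult.left_commute)
  then show ?thesis unfolding V.subspace_def Q_def
    by (auto simp: gpart_add gpart_mscale distrib_left ideal_gen_add ideal_gen_0 ideal_gen_mscale)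
qed

definition "s k = V.dim (S k)"
definition "i k = V.dim (I \<inter> S k)"
definition "h k = s k - i k"
definition "c k = hilb_fun n J k"
definition "injk k \<longleftrightarrow> (\<forall>f\<in>S k. l * f \<in> I \<longrightarrow> f \<in> I)"
definition "surjk k \<longleftrightarrow> (\<forall>g\<in>S (Suc k). \<exists>f\<in>S k. g - l * f \<in> I)"

lemma i_le_s: "i k \<le> s k"
  unfolding i_def s_def by (rule dim_mono_fin[OF _ S_fin]) auto

lemma RN: "V.subspace U \<Longrightarrow> U \<subseteq> S k \<Longrightarrow> V.dim (T ` U) + V.dim {x\<in>U. T x = 0} = V.dim U"
  by (rule rank_nullity[OF _ _ S_fin(2) linear_subst]) (use S_fin(1) in blast)+

lemma RNl: "V.subspace U \<Longrightarrow> U \<subseteq> S k \<Longrightarrow> V.dim ((\<lambda>x. l * x) ` U) + V.dim {x\<in>U. l * x = 0} = V.dim U"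
  by (rule rank_nullity[OF _ _ S_fin(2) linear_multl]) (use S_fin(1) in blast)+

lemma c_eq: "int (c k) = int (V.dim (T ` S k)) - int (V.dim (T ` (I \<inter> S k)))"
proof -
  have "V.dim (J \<inter> R k) \<le> V.dim (R k)"
    by (rule dim_mono_fin[OF _ gpart_fin]) auto
  then show ?thesis unfolding c_def hilb_fun_def kdim_V imS imI by simp
qed

lemma Z_sub: "{x\<in>I \<inter> S k. T x = 0} \<subseteq> {x\<in>S k. T x = 0}" by auto

lemma c0: "c 0 = h 0"
proof -
  have Z: "{x\<in>S 0. T x = 0} = {0}" using kernel[of _ 0] by (auto simp: subst_0)
  have Z': "{x\<in>I \<inter> S 0. T x = 0} = {0}" using Z by (auto simp: ideal_gen_0)
  have "int (c 0) = int (s 0) - int (i 0)"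
    using c_eq[of 0] RN[of "S 0" 0, OF subspace_gpart order_refl] RN[of "I \<inter> S 0" 0, OF subspace_IS Int_lower2] Z Z'
    by (simp add: dim_zero_set s_def i_def)
  then show ?thesis using i_le_s[of 0] by (simp add: h_def)
qed

lemma key_formula:
  "int (c (Suc k)) = int (s (Suc k)) - int (s k) - int (i (Suc k)) + int (V.dim (Q k))"
proof -
  let ?\<mu> = "\<lambda>x. l * x"
  have Z: "{x\<in>S (Suc k). T x = 0} = ?\<mu> ` S k"
  proof
    show "{x\<in>S (Suc k). T x = 0} \<subseteq> ?\<mu> ` S k" using kernel[of _ "Suc k"] by force
    show "?\<mu> ` S k \<subseteq> {x\<in>S (Suc k). T x = 0}"
      using gpart_mult[OF l] by (auto simp: subst_mult phil)
  qed
  have Z': "{x\<in>I \<inter> S (Suc k). T x = 0} = ?\<mu> ` Q k"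
    using Z unfolding Q_def by auto
  have W: "{x\<in>Q k. l * x = 0} = {x\<in>S k. l * x = 0}"
    unfolding Q_def by (auto simp: ideal_gen_0)
  have "Q k \<subseteq> S k" unfolding Q_def by auto
  note r1 = RN[of "S (Suc k)" "Suc k", OF subspace_gpart order_refl]
    and r2 = RN[of "I \<inter> S (Suc k)" "Suc k", OF subspace_IS Int_lower2]
    and r3 = RNl[of "S k" k, OF subspace_gpart order_refl] and r4 = RNl[OF subspace_Q \<open>Q k \<subseteq> S k\<close>]
  show ?thesis
    using c_eq[of "Suc k"] r1 r2 r3 r4 unfolding Z Z' W s_def i_def by simp
qed

lemma c_inj: "injk k \<Longrightarrow> int (c (Suc k)) = int (h (Suc k)) - int (h k)"
proof -
  assume "injk k"
  then have "Q k = I \<inter> S k"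
    unfolding Q_def injk_def using ideal_gen_mult[OF _ gpart_in_vars[OF l]] by auto
  then show ?thesis using key_formula[of k] i_le_s[of k] i_le_s[of "Suc k"]
    by (simp add: h_def i_def)
qed

lemma c_surj: "surjk k \<Longrightarrow> c (Suc k) = 0 \<and> h (Suc k) \<le> h k"
proof -
  assume sj: "surjk k"
  have "T ` S (Suc k) \<subseteq> T ` (I \<inter> S (Suc k))"
  proof
    fix y assume "y \<in> T ` S (Suc k)"
    then obtain g where g: "g \<in> S (Suc k)" "y = T g" by auto
    then obtain f where f: "f \<in> S k" "g - l * f \<in> I" using sj unfolding surjk_def by blast
    have "l * f \<in> S (Suc k)" using gpart_mult[OF l f(1)] by simp
    then have "g - l * f \<in> S (Suc k)" using gpart_diff[OF g(1)] by simp
    moreover have "T (g - l * f) = y" using g by (simp add: subst_diff subst_mult phil)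
    ultimately show "y \<in> T ` (I \<inter> S (Suc k))" using f(2) by force
  qed
  then have eq: "T ` S (Suc k) = T ` (I \<inter> S (Suc k))" by auto
  then have c0: "c (Suc k) = 0" using c_eq[of "Suc k"] by simp
  have "I \<inter> S k \<subseteq> Q k" unfolding Q_def using ideal_gen_mult[OF _ gpart_in_vars[OF l]] by auto
  then have "i k \<le> V.dim (Q k)" unfolding i_def
    by (rule dim_mono_fin[OF _ _ S_fin(2)]) (use S_fin(1) in \<open>auto simp: Q_def\<close>)
  then have "h (Suc k) \<le> h k"
    using key_formula[of k] c0 i_le_s[of k] i_le_s[of "Suc k"] by (simp add: h_def)
  with c0 show ?thesis by simp
qed

lemma surjk_Suc: "surjk k \<Longrightarrow> surjk (Suc k)"
  unfolding surjk_def
proof (intro ballI)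
  fix g assume sj: "\<forall>g\<in>S (Suc k). \<exists>f\<in>S k. g - l * f \<in> I" and g: "g \<in> S (Suc (Suc k))"
  obtain q where q: "\<forall>j<Suc n. q j \<in> S (Suc k)" "g = (\<Sum>j<Suc n. mvar j * q j)"
    using decomp[OF g] by blast
  have "\<forall>j. \<exists>f. j < Suc n \<longrightarrow> f \<in> S k \<and> q j - l * f \<in> I" using sj q(1) by blast
  then obtain F where F: "\<And>j. j < Suc n \<Longrightarrow> F j \<in> S k \<and> q j - l * F j \<in> I" by metis
  define f where "f = (\<Sum>j<Suc n. mvar j * F j)"
  have "f \<in> S (Suc k)" unfolding f_def
    using F by (intro gpart_sum) (metis (no_types, lifting) add.commute gpart_mult lessThan_iff mvar_gpart plus_1_eq_Suc)
  moreover have "g - l * f = (\<Sum>j<Suc n. mvar j * (q j - l * F j))"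
    unfolding q(2) f_def by (simp add: sum_distrib_left sum_subtractf[symmetric] algebra_simps)
  moreover have "\<dots> \<in> I"
    using F by (intro ideal_gen_sum ideal_gen_mult) (auto intro: gpart_in_vars[OF mvar_gpart])
  ultimately show "\<exists>f\<in>S (Suc k). g - l * f \<in> I" by metis
qed

end

context mcisetup
begin

lemma h_card: "h k = card (GoodM (Suc n) d k)"
  unfolding h_def s_def i_def using hilb_MCI[of "Suc n" k d] by simp

lemma surjk_mono: "surjk a \<Longrightarrow> a \<le> b \<Longrightarrow> surjk b"
proof (induction b)
  case 0 then show ?case by simp
next
  case (Suc b)
  then show ?case by (cases "a = Suc b") (auto simp: surjk_Suc)
qed

lemma series:
  assumes W: "\<And>k. injk k \<or> surjk k"
  shows "hilb_series n J = trunc_neg ((\<Prod>i<Suc n. 1 - fps_X ^ d i) * geom_fps ^ n)"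
proof -
  let ?H = "(\<Prod>i<Suc n. 1 - fps_X ^ d i) * geom_fps ^ Suc n :: int fps"
  let ?P = "(\<Prod>i<Suc n. 1 - fps_X ^ d i) * geom_fps ^ n :: int fps"
  have Hk: "fps_nth ?H k = int (h k)" for k using card_GoodM_coeff[of "Suc n" d k] h_card by simp
  have "?P = ?H * (1 - fps_X)"
    using geom_fps_inverse by (simp add: mult.assoc)
  also have "\<dots> = ?H - fps_X * ?H" by (simp add: algebra_simps)
  finally have Pe: "?P = ?H - fps_X * ?H" .
  define \<delta> where "\<delta> k = fps_nth ?P k" for k
  have dk: "\<delta> k = fps_nth ?H k - (if k = 0 then 0 else fps_nth ?H (k - 1))" for k
    unfolding \<delta>_def Pe by (simp only: fps_sub_nth fps_X_mult_nth)
  have d0: "\<delta> 0 = int (h 0)" using dk[of 0] Hk[of 0] by simp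
  have dS: "\<delta> (Suc k) = int (h (Suc k)) - int (h k)" for k using dk[of "Suc k"] Hk[of k] Hk[of "Suc k"] by simp
  have main: "int (c k) = (if \<forall>i\<le>k. 0 \<le> \<delta> i then \<delta> k else 0)" for k
  proof (cases k)
    case 0
    then show ?thesis using c0 d0 by simp
  next
    case (Suc k')
    show ?thesis
    proof (cases "\<forall>i\<le>k. 0 \<le> \<delta> i")
      case True
      then have nn: "0 \<le> \<delta> k" by simp
      show ?thesis
      proof (cases "injk k'")
        case True
        then show ?thesis using c_inj[of k'] dS[of k'] nn \<open>\<forall>i\<le>k. 0 \<le> \<delta> i\<close> Suc by simp
      next
        case False
        then have "surjk k'" using W by blast
        then show ?thesis using c_surj[of k'] dS[of k'] nn \<open>\<forall>i\<le>k. 0 \<le> \<delta> i\<close> Suc by simp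
      qed
    next
      case False
      then obtain i where i: "i \<le> k" "\<delta> i < 0" by (auto simp: not_le)
      have "i \<noteq> 0"
      proof
        assume "i = 0" then show False using i(2) d0 by simp
      qed
      then obtain i' where i': "i = Suc i'" by (cases i) auto
      have "\<not> injk i'"
      proof
        assume "injk i'"
        then have "\<delta> i = int (c i)" using c_inj[of i'] dS[of i'] i' by simp
        then show False using i by simp
      qed
      then have "surjk i'" using W by blast
      then have "surjk k'" using surjk_mono[of i' k'] i i' Suc by simp
      then have "c k = 0" using c_surj[of k'] Suc by simp
      then show ?thesis using False by (simp only: if_False)
    qed
  qed
  show ?thesis
    unfolding hilb_series_def trunc_neg_def
  proof (rule fps_ext)
    fix k
    show "fps_nth (Abs_fps (\<lambda>j. int (hilb_fun n J j))) k =
      fps_nth (Abs_fps (\<lambda>j. if \<forall>i\<le>j. 0 \<le> fps_nth ?P i then fps_nth ?P j else 0)) k"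
      using main[of k] unfolding c_def \<delta>_def fps_nth_Abs_fps .
  qed
qed

end

lemma one_notin_MCI:
  assumes "\<forall>i<N. d i > 0"
  shows "(1 :: 'a::field mpoly) \<notin> ideal_gen N (\<lambda>i. mvar i ^ d i) N"
proof
  assume "(1 :: 'a mpoly) \<in> ideal_gen N (\<lambda>i. mvar i ^ d i) N"
  from keys_MCI[OF this] have "0 \<in> {m. \<exists>i<N. d i \<le> Poly_Mapping.lookup m i}" by simp
  then show False using assms by auto
qed

lemma good_l:
  assumes d: "\<forall>i<Suc n. d i > 0"
    and l0: "l0 \<in> gpart (Suc n) 1"
    and W0: "\<forall>i. (\<forall>f\<in>gpart (Suc n) i. l0 * f \<in> ideal_gen (Suc n) (\<lambda>i. mvar i ^ d i) (Suc n) \<longrightarrow> f \<in> ideal_gen (Suc n) (\<lambda>i. mvar i ^ d i) (Suc n)) \<or>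
      (\<forall>g\<in>gpart (Suc n) (Suc i). \<exists>f\<in>gpart (Suc n) i. g - l0 * f \<in> ideal_gen (Suc n) (\<lambda>i. (mvar i :: 'a::field mpoly) ^ d i) (Suc n))"
  shows "\<exists>l. l \<in> gpart (Suc n) 1 \<and> l \<noteq> 0 \<and> (\<forall>i. (\<forall>f\<in>gpart (Suc n) i. l * f \<in> ideal_gen (Suc n) (\<lambda>i. mvar i ^ d i) (Suc n) \<longrightarrow> f \<in> ideal_gen (Suc n) (\<lambda>i. mvar i ^ d i) (Suc n)) \<or>
      (\<forall>g\<in>gpart (Suc n) (Suc i). \<exists>f\<in>gpart (Suc n) i. g - l * f \<in> ideal_gen (Suc n) (\<lambda>i. (mvar i :: 'a mpoly) ^ d i) (Suc n)))"
proof (cases "l0 = 0")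
  case False then show ?thesis using l0 W0 by blast
next
  case True
  let ?I = "ideal_gen (Suc n) (\<lambda>i. (mvar i :: 'a mpoly) ^ d i) (Suc n)"
  have "\<not> (\<forall>f\<in>gpart (Suc n) 0. l0 * f \<in> ?I \<longrightarrow> f \<in> ?I)"
    using True one_notin_MCI[OF d] gpart_one ideal_gen_0 by force
  then have S1: "\<forall>g\<in>gpart (Suc n) 1. g \<in> ?I" using W0 True by force
  have Sall: "g \<in> ?I" if g: "g \<in> gpart (Suc n) (Suc i)" for g i
  proof -
    obtain q where q: "\<forall>k<Suc n. q k \<in> gpart (Suc n) i" "g = (\<Sum>k<Suc n. mvar k * q k)"
      using decomp[OF g] by blast
    show ?thesis unfolding q(2)
    proof (rule ideal_gen_sum)
      fix k assume k: "k \<in> {..<Suc n}"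
      have "q k * mvar k \<in> ?I" using S1 mvar_gpart[of k "Suc n"] k q(1)
        by (intro ideal_gen_mult) (auto intro: gpart_in_vars)
      then show "mvar k * q k \<in> ?I" by (simp add: mult.commute)
    qed
  qed
  have "mvar 0 \<noteq> (0 :: 'a mpoly)" unfolding mvar_def by (metis lookup_single_eq lookup_zero zero_neq_one)
  moreover have "(mvar 0 :: 'a mpoly) \<in> gpart (Suc n) 1" by (rule mvar_gpart) simp
  moreover have "\<forall>g\<in>gpart (Suc n) (Suc i). \<exists>f\<in>gpart (Suc n) i. g - mvar 0 * f \<in> ?I" for i
    using Sall by (metis gpart_0 mult_zero_right diff_zero)
  ultimately show ?thesis by blast
qed

theorem theorem4p17:
  fixes n :: nat and d :: "nat \<Rightarrow> nat"
  assumes "CHAR('k::field) > 0"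
    and "\<forall>i<n+1. d i > 0"
    and "WLP (n+1) (ideal_gen (n+1) (\<lambda>i. (mvar i :: 'k mpoly) ^ d i) (n+1))"
  shows "\<exists>f :: nat \<Rightarrow> 'k mpoly. (\<forall>i<n+1. f i \<in> gpart n (d i)) \<and>
           hilb_series n (ideal_gen n f (n+1)) =
           trunc_neg ((\<Prod>i<n+1. 1 - fps_X ^ d i) * geom_fps ^ n)"
proof -
  have d: "\<forall>i<Suc n. d i > 0" using assms(2) by simp
  obtain l0 where l0: "l0 \<in> gpart (Suc n) 1" and W0: "\<forall>i.
      (\<forall>f\<in>gpart (Suc n) i. l0 * f \<in> ideal_gen (Suc n) (\<lambda>i. (mvar i :: 'k mpoly) ^ d i) (Suc n) \<longrightarrow> f \<in> ideal_gen (Suc n) (\<lambda>i. (mvar i :: 'k mpoly) ^ d i) (Suc n)) \<or>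
      (\<forall>g\<in>gpart (Suc n) (Suc i). \<exists>f\<in>gpart (Suc n) i. g - l0 * f \<in> ideal_gen (Suc n) (\<lambda>i. (mvar i :: 'k mpoly) ^ d i) (Suc n))"
    using assms(3) unfolding WLP_def by auto
  obtain l where l: "l \<in> gpart (Suc n) 1" "l \<noteq> 0" and W: "\<forall>i.
      (\<forall>f\<in>gpart (Suc n) i. l * f \<in> ideal_gen (Suc n) (\<lambda>i. (mvar i :: 'k mpoly) ^ d i) (Suc n) \<longrightarrow> f \<in> ideal_gen (Suc n) (\<lambda>i. (mvar i :: 'k mpoly) ^ d i) (Suc n)) \<or>
      (\<forall>g\<in>gpart (Suc n) (Suc i). \<exists>f\<in>gpart (Suc n) i. g - l * f \<in> ideal_gen (Suc n) (\<lambda>i. (mvar i :: 'k mpoly) ^ d i) (Suc n))"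
    using good_l[OF d l0 W0] by blast
  define a where "a = (\<lambda>i. Poly_Mapping.lookup l (Poly_Mapping.single i 1))"
  obtain j where j: "j < Suc n" "a j \<noteq> 0"
  proof -
    have "\<exists>j<Suc n. a j \<noteq> 0"
    proof (rule ccontr)
      assume "\<not> ?thesis"
      then have "l = (\<Sum>i<Suc n. C 0 * mvar i)" using linform[OF l(1)] unfolding a_def by auto
      then show False using l(2) by simp
    qed
    then show ?thesis using that by blast
  qed
  interpret mcisetup n d l "sig a j (Suc n)" "tau j"
  proof
    show "l \<in> gpart (Suc n) 1" by (rule l(1))
    show "\<And>i. i < Suc n \<Longrightarrow> sig a j (Suc n) i \<in> gpart n 1" using sig_gpart j(1) by blast
    show "\<And>i. i < n \<Longrightarrow> tau j i \<in> gpart (Suc n) 1" by (rule tau_gpart)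
    show "\<And>i. i < n \<Longrightarrow> subst (sig a j (Suc n)) (tau j i) = mvar i" by (rule phi_tau)
    show "\<And>i. i < Suc n \<Longrightarrow> congl (Suc n) l (mvar i) (subst (tau j) (sig a j (Suc n) i))"
      by (rule congl_sig[OF l(1) j a_def])
    show "subst (sig a j (Suc n)) l = 0" by (rule phi_l[OF l(1) j a_def])
  qed
  have "hilb_series n (ideal_gen n (\<lambda>i. sig a j (Suc n) i ^ d i) (Suc n)) =
        trunc_neg ((\<Prod>i<Suc n. 1 - fps_X ^ d i) * geom_fps ^ n)"
    by (rule series) (use W in \<open>simp add: injk_def surjk_def\<close>)
  moreover have "\<forall>i<Suc n. sig a j (Suc n) i ^ d i \<in> gpart n (d i)"
    using sig_gpart j(1) by (blast intro: gpart_power)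
  ultimately show ?thesis by (intro exI[of _ "\<lambda>i. sig a j (Suc n) i ^ d i"]) simp
qed

end
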